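(* Let $\theta\mapsto\mathcal E_\theta$ be a family of quantum channels on $d\times d$ matrices with Liouville representation $T_\theta$, and let $\theta_0$ be a parameter value. Suppose that all the peripheral eigenvectors $\{\lim_{\theta\to\theta_0}|R_i\rangle\rangle\}_i$ of $T_\theta$ are mutually orthogonal, and that there exists some peripheral eigenvalue $\lambda_j$ with $\dot\lambda_j\neq0$. Then the sequential QFI of $N$ channels can achieve the Heisenberg limit at $\theta=\theta_0$: there exists an input state $\rho_0$ (independent of $N$) such that the quantum Fisher information of $\mathcal E_\theta^N(\rho_0)$ at $\theta=\theta_0$ scales as $N^2$, i.e. $\liminf_{N\to\infty}F^Q(\mathcal E_\theta^N(\rho_0))|_{\theta=\theta_0}/N^2>0$.
   Context: A quantum channel with Kraus operators $\{K_i^\theta\}$, $\mathcal E_\theta(\rho)=\sum_iK_i^\theta\rho K_i^{\theta\dagger}$, has Liouville representation $T_\theta=\sum_iK_i^\theta\otimes K_i^{\theta*}$, a $d^2\times d^2$ matrix with $T_\theta|\rho\rangle\rangle=|\mathcal E_\theta(\rho)\rangle\rangle$, where $|\rho\rangle\rangle=(\rho_{11},\rho_{12},\dots,\rho_{dd})^T$ is the vectorization of $\rho$ and $\langle\langle A|B\rangle\rangle=\operatorname{Tr}(A^\dagger B)$. Eigenvalues $\lambda_i$ of $T_\theta$ with $|\lambda_i|=1$ are called peripheral eigenvalues and their eigenvectors $|R_i\rangle\rangle$ (with corresponding eigenmatrices $R_i$) peripheral eigenvectors. Eigenvalues, eigenvectors and expansion coefficients are assumed to be continuously differentiable in $\theta$;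 a dot denotes $d/d\theta$. The quantum Fisher information of $\rho_\theta$ is $F^Q(\rho_\theta)=\operatorname{Tr}(\rho_\theta L_{\rho_\theta}^2)$ where the symmetric logarithmic derivative $L_{\rho_\theta}$ satisfies $2\dot\rho_\theta=\rho_\theta L_{\rho_\theta}+L_{\rho_\theta}\rho_\theta$. No ancilla and no interleaved control are used: the output state is $\mathcal E_\theta^N(\rho_0)$. *)

theory Defs
  imports "HOL-Analysis.Analysis"
begin

text \<open>d x d complex matrices are rendered as complex^'n^'n with 'n a finite index
type (d = CARD('n)). Superoperators (d^2 x d^2) act on complex^('n \<times> 'n).\<close>

definition cadj :: "complex^'n^'n \<Rightarrow> complex^'n^'n" where
  "cadj A = (\<chi> i j. cnj (A $ j $ i))"

definition cconj :: "complex^'n^'n \<Rightarrow> complex^'n^'n" where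
  "cconj A = (\<chi> i j. cnj (A $ i $ j))"

definition vecz :: "complex^'n^'n \<Rightarrow> complex^('n \<times> 'n)" where
  "vecz A = (\<chi> p. A $ fst p $ snd p)"

definition hs_inner :: "complex^'n^'n \<Rightarrow> complex^'n^'n \<Rightarrow> complex" where
  "hs_inner A B = trace (cadj A ** B)"

text \<open>Kronecker product, consistent with row-major vectorisation.\<close>
definition kron :: "complex^'n^'n \<Rightarrow> complex^'n^'n \<Rightarrow> complex^('n \<times> 'n)^('n \<times> 'n)" where
  "kron A B = (\<chi> p q. A $ fst p $ fst q * B $ snd p $ snd q)"

definition channel :: "('k::finite \<Rightarrow> complex^'n^'n) \<Rightarrow> complex^'n^'n \<Rightarrow> complex^'n^'n" where
  "channel K \<rho> = (\<Sum>i\<in>UNIV. K i ** \<rho> ** cadj (K i))"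

definition liouville :: "('k::finite \<Rightarrow> complex^'n^'n) \<Rightarrow> complex^('n \<times> 'n)^('n \<times> 'n)" where
  "liouville K = (\<Sum>i\<in>UNIV. kron (K i) (cconj (K i)))"

definition trace_preserving :: "('k::finite \<Rightarrow> complex^'n^'n) \<Rightarrow> bool" where
  "trace_preserving K \<longleftrightarrow> (\<Sum>i\<in>UNIV. cadj (K i) ** K i) = mat 1"

definition density :: "complex^'n^'n \<Rightarrow> bool" where
  "density \<rho> \<longleftrightarrow> cadj \<rho> = \<rho>
     \<and> (\<forall>x::complex^'n. 0 \<le> Re (\<Sum>i\<in>UNIV. cnj (x $ i) * (\<rho> *v x) $ i))
     \<and> trace \<rho> = 1"

definition is_SLD :: "complex^'n^'n \<Rightarrow> complex^'n^'n \<Rightarrow> complex^'n^'n \<Rightarrow> bool" where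
  "is_SLD \<rho> \<rho>' L \<longleftrightarrow> cadj L = L \<and> (2::real) *\<^sub>R \<rho>' = \<rho> ** L + L ** \<rho>"

definition QFI :: "complex^'n^'n \<Rightarrow> complex^'n^'n \<Rightarrow> real" where
  "QFI \<rho> \<rho>' = (THE f. \<exists>L. is_SLD \<rho> \<rho>' L \<and> f = Re (trace (\<rho> ** L ** L)))"

definition QFI_at :: "(real \<Rightarrow> complex^'n^'n) \<Rightarrow> real \<Rightarrow> real" where
  "QFI_at \<rho> \<theta>0 = QFI (\<rho> \<theta>0) (vector_derivative \<rho> (at \<theta>0))"

end

theory Submission
  imports Defs
begin


type_synonym 'n cmat = "complex^'n^'n"

definition cscale :: "complex \<Rightarrow> complex^'n^'m \<Rightarrow> complex^'n^'m" where
  "cscale c A = (\<chi> i j. c * A $ i $ j)"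

definition vdot :: "complex^'n \<Rightarrow> complex^'n \<Rightarrow> complex" where
  "vdot x y = (\<Sum>i\<in>UNIV. cnj (x $ i) * y $ i)"

definition qf :: "complex^'n^'n \<Rightarrow> complex^'n \<Rightarrow> complex" where
  "qf A x = vdot x (A *v x)"

definition unvecz :: "complex^('n \<times> 'n) \<Rightarrow> complex^'n^'n" where
  "unvecz v = (\<chi> a b. v $ (a, b))"

lemma vecz_unvecz[simp]: "vecz (unvecz v) = v" and unvecz_vecz[simp]: "unvecz (vecz A) = A"
  by (auto simp: vecz_def unvecz_def vec_eq_iff)

lemma cadj_cadj[simp]: "cadj (cadj A) = A"
  by (simp add: cadj_def vec_eq_iff)

lemma cadj_mult: "cadj (A ** B) = cadj B ** cadj (A::complex^'n^'n)"
  by (simp add: cadj_def vec_eq_iff matrix_matrix_mult_def mult.commute)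

lemma cadj_add[simp]: "cadj (A + B) = cadj A + cadj B"
  by (simp add: cadj_def vec_eq_iff)

lemma cadj_diff[simp]: "cadj (A - B) = cadj A - cadj B"
  by (simp add: cadj_def vec_eq_iff)

lemma cadj_0[simp]: "cadj 0 = 0"
  by (simp add: cadj_def vec_eq_iff)

lemma cadj_scaleR[simp]: "cadj (r *\<^sub>R A) = r *\<^sub>R cadj A"
  by (simp add: cadj_def vec_eq_iff)

lemma cadj_cscale[simp]: "cadj (cscale c A) = cscale (cnj c) (cadj A)"
  by (simp add: cadj_def cscale_def vec_eq_iff)

lemma cadj_uminus[simp]: "cadj (- A) = - cadj A"
  by (simp add: cadj_def vec_eq_iff)

lemma trace_cadj: "trace (cadj A) = cnj (trace A)"
  by (simp add: cadj_def trace_def)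

lemma trace_cscale: "trace (cscale c A) = c * trace A"
  by (simp add: cscale_def trace_def sum_distrib_left)

lemma trace_scaleR: "trace (r *\<^sub>R (A::complex^'n^'n)) = r *\<^sub>R trace A"
  by (simp add: trace_def scaleR_sum_right)

lemma trace_uminus: "trace (- (A::complex^'n^'n)) = - trace A"
  by (simp add: trace_def sum_negf)

lemma cscale_mult_left: "cscale c A ** B = cscale c (A ** B)"
  by (simp add: cscale_def vec_eq_iff matrix_matrix_mult_def sum_distrib_left mult.assoc)

lemma cscale_mult_right: "A ** cscale c B = cscale c (A ** B)"
  by (simp add: cscale_def vec_eq_iff matrix_matrix_mult_def sum_distrib_left mult.left_commute)

lemma scaleR_mult_left: "(r *\<^sub>R A) ** (B::complex^'n^'n) = r *\<^sub>R (A ** B)"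
  by (simp add: vec_eq_iff matrix_matrix_mult_def scaleR_sum_right)

lemma scaleR_mult_right: "(A::complex^'n^'n) ** (r *\<^sub>R B) = r *\<^sub>R (A ** B)"
  by (simp add: vec_eq_iff matrix_matrix_mult_def scaleR_sum_right)

lemma matrix_sub_ldistrib: "(A::complex^'n^'n) ** (B - C) = A ** B - A ** C"
  by (simp add: vec_eq_iff matrix_matrix_mult_def sum_subtractf right_diff_distrib)

lemma matrix_sub_rdistrib: "((B::complex^'n^'n) - C) ** A = B ** A - C ** A"
  by (simp add: vec_eq_iff matrix_matrix_mult_def sum_subtractf left_diff_distrib)

lemma matrix_neg_left: "(- (B::complex^'n^'n)) ** A = - (B ** A)"
  by (simp add: vec_eq_iff matrix_matrix_mult_def sum_negf)

lemma matrix_neg_right: "(A::complex^'n^'n) ** (- B) = - (A ** B)"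
  by (simp add: vec_eq_iff matrix_matrix_mult_def sum_negf)

lemma cadj_mat1[simp]: "cadj (mat 1) = mat 1"
  by (simp add: cadj_def mat_def vec_eq_iff)

lemma trace_sandwich: "trace (cadj Y ** \<rho> ** Y) = (\<Sum>k\<in>UNIV. qf \<rho> (column k (Y::complex^'n^'n)))"
  unfolding trace_def
proof (rule sum.cong[OF refl])
  fix k
  have "(cadj Y ** \<rho> ** Y)$k$k = (\<Sum>b\<in>UNIV. \<Sum>a\<in>UNIV. cnj (Y$a$k) * \<rho>$a$b * Y$b$k)"
    by (simp add: matrix_matrix_mult_def cadj_def sum_distrib_right)
  also have "\<dots> = (\<Sum>a\<in>UNIV. \<Sum>b\<in>UNIV. cnj (Y$a$k) * \<rho>$a$b * Y$b$k)"
    by (rule sum.swap)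
  also have "\<dots> = qf \<rho> (column k Y)"
    by (simp add: qf_def vdot_def column_def matrix_vector_mult_def sum_distrib_left mult.assoc)
  finally show "(cadj Y ** \<rho> ** Y)$k$k = qf \<rho> (column k Y)" .
qed

definition psd :: "complex^'n^'n \<Rightarrow> bool" where
  "psd A \<longleftrightarrow> (\<forall>x. 0 \<le> Re (qf A x))"

lemma density_psd: "density \<rho> \<Longrightarrow> psd \<rho>"
  by (simp add: density_def psd_def qf_def vdot_def)

lemma trace_sandwich_nonneg: "psd \<rho> \<Longrightarrow> 0 \<le> Re (trace (cadj Y ** \<rho> ** Y))"
  unfolding trace_sandwich psd_def by (simp add: sum_nonneg)


lemma inner_cmat: "inner (A::complex^'n^'n) B = Re (trace (cadj A ** B))"
proof -
  have eq: "trace (cadj A ** B) = (\<Sum>i\<in>UNIV. \<Sum>j\<in>UNIV. cnj (A$i$j) * B$i$j)"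
    unfolding trace_def cadj_def matrix_matrix_mult_def by simp (rule sum.swap)
  have "A \<bullet> B = (\<Sum>i\<in>UNIV. \<Sum>j\<in>UNIV. Re (cnj (A$i$j) * B$i$j))"
    unfolding inner_vec_def inner_complex_def by simp
  also have "\<dots> = Re (\<Sum>i\<in>UNIV. \<Sum>j\<in>UNIV. cnj (A$i$j) * B$i$j)"
    by (simp only: Re_sum)
  finally show ?thesis by (simp only: eq)
qed

lemma vdot_add_left: "vdot (x + y) z = vdot x z + vdot y z"
  by (simp add: vdot_def sum.distrib distrib_right)
lemma vdot_add_right: "vdot x (y + z) = vdot x y + vdot x z"
  by (simp add: vdot_def sum.distrib distrib_left)
lemma vdot_diff_left: "vdot (x - y) z = vdot x z - vdot y z"
  by (simp add: vdot_def sum_subtractf left_diff_distrib)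
lemma vdot_diff_right: "vdot x (y - z) = vdot x y - vdot x z"
  by (simp add: vdot_def sum_subtractf right_diff_distrib)
lemma vdot_smult_left: "vdot (c *s x) y = cnj c * vdot x y"
  by (simp add: vdot_def sum_distrib_left mult.assoc)
lemma vdot_smult_right: "vdot x (c *s y) = c * vdot x y"
  by (simp add: vdot_def sum_distrib_left mult.left_commute)
lemma vdot_cnj: "cnj (vdot x y) = vdot y x"
  by (simp add: vdot_def mult.commute)
lemma vdot_adj: "vdot x (A *v y) = vdot (cadj A *v x) y"
proof -
  have "vdot x (A *v y) = (\<Sum>i\<in>UNIV. \<Sum>j\<in>UNIV. cnj (x$i) * A$i$j * y$j)"
    by (simp add: vdot_def matrix_vector_mult_def sum_distrib_left mult.assoc)
  also have "\<dots> = (\<Sum>j\<in>UNIV. \<Sum>i\<in>UNIV. cnj (x$i) * A$i$j * y$j)"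
    by (rule sum.swap)
  also have "\<dots> = vdot (cadj A *v x) y"
    by (simp add: vdot_def cadj_def matrix_vector_mult_def sum_distrib_right sum_distrib_left ac_simps)
  finally show ?thesis .
qed
lemma vdot_self_Im: "Im (vdot x x) = 0"
  by (simp add: vdot_def Im_sum)
lemma vdot_self_Re: "Re (vdot x x) = (\<Sum>i\<in>UNIV. (cmod (x$i))\<^sup>2)"
proof -
  have "Re (cnj z * z) = (cmod z)^2" for z using cmod_power2[of z] by (simp add: power2_eq_square)
  then show ?thesis by (simp add: vdot_def Re_sum)
qed
lemma vdot_self_nonneg: "0 \<le> Re (vdot x x)"
  by (simp add: vdot_self_Re sum_nonneg)
lemma vdot_self_zero: "Re (vdot x x) = 0 \<Longrightarrow> x = 0"
  unfolding vdot_self_Re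
  by (subst (asm) sum_nonneg_eq_0_iff) (auto simp: vec_eq_iff)

lemma qf_expand: "qf A (x + c *s y) = qf A x + c * vdot x (A *v y) + cnj c * vdot y (A *v x) + cnj c * c * qf A y"
  by (simp add: qf_def matrix_vector_right_distrib vector_scalar_commute vdot_add_left vdot_add_right
      vdot_smult_left vdot_smult_right algebra_simps)

lemma disc:
  fixes a b c :: real
  assumes "\<And>t. 0 \<le> a + 2*b*t + c*t^2"
  shows "b^2 \<le> a*c"
proof -
  have a0: "0 \<le> a" using assms[of 0] by simp
  consider "c > 0" | "c = 0" | "c < 0" by linarith
  then show ?thesis
  proof cases
    case 1
    have "0 \<le> a + 2*b*(-b/c) + c*(-b/c)^2" by (rule assms)
    also have "\<dots> = a - b^2/c" using 1 by (simp add: field_simps power2_eq_square)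
    finally have "b^2/c \<le> a" by simp
    then show ?thesis using 1 by (simp add: field_simps mult.commute)
  next
    case 2
    show ?thesis
    proof (rule ccontr)
      assume "\<not> ?thesis"
      then have "b \<noteq> 0" using 2 by auto
      have "0 \<le> a + 2*b*(-(a+1)/(2*b)) + c*(-(a+1)/(2*b))^2" by (rule assms)
      also have "\<dots> = -1" using 2 \<open>b \<noteq> 0\<close> by (simp add: field_simps)
      finally show False by simp
    qed
  next
    case 3
    define t where "t = sqrt ((a+1)/(-c))"
    have "0 \<le> (a+1)/(-c)" using 3 a0 by (intro divide_nonneg_pos) auto
    then have tt: "t^2 = (a+1)/(-c)" unfolding t_def by (simp only: real_sqrt_pow2)
    have "0 \<le> a + 2*b*t + c*t^2" "0 \<le> a + 2*b*(-t) + c*(-t)^2" by (rule assms)+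
    then have "0 \<le> 2*a + 2*c*t^2" by simp
    also have "\<dots> = -2" using tt 3 by (simp add: field_simps)
    finally show ?thesis by simp
  qed
qed

lemma psd_zero:
  assumes "psd \<rho>" "cadj \<rho> = \<rho>" "Re (qf \<rho> x) = 0"
  shows "\<rho> *v x = 0"
proof -
  define y where "y = \<rho> *v x"
  have e1: "vdot x (\<rho> *v y) = vdot y y"
    by (simp add: vdot_adj assms(2) y_def)
  have e2: "vdot y (\<rho> *v x) = vdot y y" by (simp add: y_def)
  have "0 \<le> 0 + 2 * (- Re (vdot y y)) * t + Re (qf \<rho> y) * t^2" for t :: real
  proof -
    have "0 \<le> Re (qf \<rho> (x + complex_of_real (-t) *s y))"
      using assms(1) by (simp add: psd_def)
    also have "\<dots> = 0 + 2 * (- Re (vdot y y)) * t + Re (qf \<rho> y) * t^2"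
      unfolding qf_expand e1 e2 using assms(3) by (simp add: power2_eq_square)
    finally show ?thesis .
  qed
  from disc[OF this] have "(Re (vdot y y))^2 \<le> 0" by simp
  then have "Re (vdot y y) = 0" by simp
  then show ?thesis using vdot_self_zero y_def by blast
qed


primrec mp :: "complex^'n^'n \<Rightarrow> nat \<Rightarrow> complex^'n^'n" where
  "mp H 0 = mat 1"
| "mp H (Suc k) = H ** mp H k"

lemma mp_Suc_right: "mp H (Suc k) = mp H k ** H"
  by (induction k) (simp_all add: matrix_mul_assoc)

lemma mp_add: "mp H (a + b) = mp H a ** mp H b"
  by (induction a) (simp_all add: matrix_mul_assoc)

lemma matrix_mul_0_right[simp]: "(A::complex^'n^'n) ** 0 = 0"
  by (simp add: vec_eq_iff matrix_matrix_mult_def)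
lemma matrix_mul_0_left[simp]: "0 ** (A::complex^'n^'n) = 0"
  by (simp add: vec_eq_iff matrix_matrix_mult_def)

lemma matrix_sum_left: "(A::complex^'n^'n) ** sum f S = (\<Sum>x\<in>S. A ** f x)"
  by (induction S rule: infinite_finite_induct) (simp_all add: matrix_add_ldistrib)

lemma matrix_add_rdistrib': "((B::complex^'n^'n) + C) ** A = B ** A + C ** A"
  by (simp add: vec_eq_iff matrix_matrix_mult_def sum.distrib distrib_right)

lemma matrix_sum_right: "sum (f::_ \<Rightarrow> complex^'n^'n) S ** (A::complex^'n^'n) = (\<Sum>x\<in>S. f x ** A)"
proof (induction S rule: infinite_finite_induct)
  case (insert x F)
  have "sum f (insert x F) ** A = (f x + sum f F) ** A" using insert by simp
  also have "\<dots> = f x ** A + sum f F ** A" by (rule matrix_add_rdistrib')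
  finally show ?case using insert by simp
qed simp_all

lemma adj_self_zero:
  assumes "cadj W ** W = (0::complex^'n^'n)" shows "W = 0"
proof -
  have "trace (cadj W ** mat 1 ** W) = 0" using assms by (simp add: trace_def)
  then have "(\<Sum>k\<in>UNIV. Re (qf (mat 1) (column k W))) = 0"
    unfolding trace_sandwich by (metis Re_sum zero_complex.simps(1))
  moreover have "\<And>k. 0 \<le> Re (qf (mat 1) (column k W))"
    by (simp add: qf_def vdot_self_nonneg)
  ultimately have "\<And>k. Re (qf (mat 1) (column k W)) = 0"
    by (simp add: sum_nonneg_eq_0_iff)
  then have "\<And>k. column k W = 0"
    by (simp add: qf_def vdot_self_zero)
  then show ?thesis
    by (simp add: vec_eq_iff column_def)
qed

lemma herm_kill:
  assumes "cadj H = H" "H ** (H ** Z) = (0::complex^'n^'n)"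
  shows "H ** Z = 0"
proof -
  have "cadj (H ** Z) ** (H ** Z) = cadj Z ** (H ** (H ** Z))"
    by (simp add: cadj_mult assms(1) matrix_mul_assoc)
  then show ?thesis using assms(2) adj_self_zero by simp
qed

lemma power_dependence:
  fixes H :: "complex^'n^'n"
  shows "\<exists>c n. (\<exists>k\<le>n. c k \<noteq> 0) \<and> (\<Sum>k\<le>n. c k *\<^sub>R mp H k) = 0"
proof (cases "inj_on (mp H) {..DIM(complex^'n^'n)}")
  case True
  let ?P = "mp H ` {..DIM(complex^'n^'n)}"
  have cP: "card ?P = Suc DIM(complex^'n^'n)"
    using True by (simp add: card_image)
  have "dependent ?P"
  proof (rule ccontr)
    assume "\<not> dependent ?P"
    then have "card ?P \<le> DIM(complex^'n^'n)" using independent_bound by blast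
    then show False using cP by simp
  qed
  then obtain u where u: "\<exists>v\<in>?P. u v \<noteq> 0" "(\<Sum>v\<in>?P. u v *\<^sub>R v) = 0"
    using dependent_finite[of ?P] by auto
  define c where "c k = u (mp H k)" for k
  have "(\<Sum>k\<le>DIM(complex^'n^'n). c k *\<^sub>R mp H k) = (\<Sum>v\<in>?P. u v *\<^sub>R v)"
    unfolding c_def using True by (simp add: sum.reindex)
  moreover have "\<exists>k\<le>DIM(complex^'n^'n). c k \<noteq> 0" using u(1) c_def by auto
  ultimately show ?thesis using u(2) by metis
next
  case False
  then obtain a b where ab: "a \<le> DIM(complex^'n^'n)" "b \<le> DIM(complex^'n^'n)" "a \<noteq> b" "mp H a = mp H b"
    unfolding inj_on_def by auto
  define c :: "nat \<Rightarrow> real" where "c k = (if k = a then 1 else if k = b then -1 else 0)" for k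
  have "(\<Sum>k\<le>DIM(complex^'n^'n). c k *\<^sub>R mp H k) = (\<Sum>k\<in>{a,b}. c k *\<^sub>R mp H k)"
    by (rule sum.mono_neutral_right) (use ab in \<open>auto simp: c_def\<close>)
  also have "\<dots> = 0" using ab by (simp add: c_def)
  finally show ?thesis using ab(1) c_def by (metis one_neq_zero)
qed

lemma power_dependence_shift:
  fixes H :: "complex^'n^'n"
  assumes "cadj H = H"
  shows "(\<exists>k\<le>n. c k \<noteq> 0) \<Longrightarrow> H ** (\<Sum>k\<le>n. c k *\<^sub>R mp H k) = 0 \<Longrightarrow>
    \<exists>d m. d 0 \<noteq> 0 \<and> H ** (\<Sum>k\<le>m. d k *\<^sub>R mp H k) = 0"
proof (induction n arbitrary: c)
  case 0
  then show ?case by blast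
next
  case (Suc n)
  show ?case
  proof (cases "c 0 = 0")
    case False
    then show ?thesis using Suc.prems(2) by blast
  next
    case True
    have "(\<Sum>k\<le>Suc n. c k *\<^sub>R mp H k) = c 0 *\<^sub>R mp H 0 + (\<Sum>k\<le>n. c (Suc k) *\<^sub>R mp H (Suc k))"
      by (rule sum.atMost_Suc_shift)
    also have "\<dots> = H ** (\<Sum>k\<le>n. c (Suc k) *\<^sub>R mp H k)"
      using True by (simp add: matrix_sum_left scaleR_mult_right)
    finally have "H ** (H ** (\<Sum>k\<le>n. c (Suc k) *\<^sub>R mp H k)) = 0"
      using Suc.prems(2) by simp
    then have "H ** (\<Sum>k\<le>n. c (Suc k) *\<^sub>R mp H k) = 0"
      using herm_kill assms by blast
    moreover have "\<exists>k\<le>n. c (Suc k) \<noteq> 0"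
      using Suc.prems(1) True by (metis Suc_le_mono not0_implies_Suc)
    ultimately show ?thesis using Suc.IH[of "\<lambda>k. c (Suc k)"] by blast
  qed
qed

lemma ginv:
  fixes H :: "complex^'n^'n"
  assumes "cadj H = H"
  shows "\<exists>G. H ** G ** H = H"
proof -
  obtain c n where "(\<exists>k\<le>n. c k \<noteq> 0)" "(\<Sum>k\<le>n. c k *\<^sub>R mp H k) = 0"
    using power_dependence by blast
  then obtain d m where d: "d 0 \<noteq> 0" "H ** (\<Sum>k\<le>m. d k *\<^sub>R mp H k) = 0"
    using power_dependence_shift[OF assms, of n c] by auto
  define P where "P = (\<Sum>k<m. d (Suc k) *\<^sub>R mp H k)"
  have "(\<Sum>k\<le>m. d k *\<^sub>R mp H k) = (\<Sum>k<Suc m. d k *\<^sub>R mp H k)"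
    by (simp add: lessThan_Suc_atMost)
  also have "\<dots> = d 0 *\<^sub>R mat 1 + (\<Sum>k<m. d (Suc k) *\<^sub>R mp H (Suc k))"
    by (subst sum.lessThan_Suc_shift) simp
  also have "\<dots> = d 0 *\<^sub>R mat 1 + P ** H"
    by (simp only: P_def matrix_sum_right mp_Suc_right scaleR_mult_left)
  finally have "H ** (d 0 *\<^sub>R mat 1 + P ** H) = 0" using d(2) by simp
  then have "d 0 *\<^sub>R H + H ** P ** H = 0"
    by (simp add: matrix_add_ldistrib scaleR_mult_right matrix_mul_assoc)
  then have hp: "H ** P ** H = - (d 0 *\<^sub>R H)"
    by (metis add.commute add_eq_0_iff2 minus_minus)
  have "H ** ((- 1 / d 0) *\<^sub>R P) ** H = (- 1 / d 0) *\<^sub>R (H ** P ** H)"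
    by (simp only: scaleR_mult_right scaleR_mult_left)
  also have "\<dots> = H" using hp d(1) by simp
  finally have "H ** ((- 1 / d 0) *\<^sub>R P) ** H = H" .
  then show ?thesis by metis
qed


definition Sop :: "complex^'n^'n \<Rightarrow> complex^'n^'n \<Rightarrow> complex^'n^'n" where
  "Sop \<rho> L = \<rho> ** L + L ** \<rho>"

lemma trace_cyc3: "trace ((A::complex^'n^'n) ** B ** C) = trace (B ** C ** A)"
  by (metis matrix_mul_assoc trace_mul_sym)

lemma Sop_linear: "linear (Sop \<rho>)"
  by (rule linearI) (simp_all add: Sop_def matrix_add_ldistrib matrix_add_rdistrib'
      scaleR_mult_left scaleR_mult_right scaleR_add_right)

lemma Sop_adj:
  assumes "cadj \<rho> = \<rho>"
  shows "inner (Sop \<rho> A) B = inner A (Sop \<rho> B)"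
proof -
  have "cadj (Sop \<rho> A) = cadj A ** \<rho> + \<rho> ** cadj A"
    by (simp add: Sop_def cadj_mult assms)
  then have "inner (Sop \<rho> A) B = Re (trace (cadj A ** \<rho> ** B) + trace (\<rho> ** cadj A ** B))"
    by (simp add: inner_cmat matrix_add_rdistrib' trace_add)
  also have "trace (\<rho> ** cadj A ** B) = trace (cadj A ** (B ** \<rho>))"
    by (metis matrix_mul_assoc trace_mul_sym)
  finally show ?thesis
    by (simp add: inner_cmat Sop_def matrix_add_ldistrib trace_add matrix_mul_assoc)
qed

lemma adjoint_Sop: "cadj \<rho> = \<rho> \<Longrightarrow> adjoint (Sop \<rho>) = Sop \<rho>"
  by (rule adjoint_unique) (simp add: Sop_adj)

lemma range_Sop:
  assumes "cadj \<rho> = \<rho>"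
  shows "range (Sop \<rho>) = orthogonal_comp (Sop \<rho> -` {0})"
proof -
  have "Sop \<rho> -` {0} = orthogonal_comp (range (Sop \<rho>))"
    using ker_orthogonal_comp_adjoint[OF Sop_linear, of \<rho>] adjoint_Sop[OF assms] by simp
  then show ?thesis
    by (metis Sop_linear linear_subspace_image orthogonal_comp_self subspace_UNIV)
qed

lemma mult_zero_cols:
  assumes "\<And>k. \<rho> *v column k A = 0"
  shows "\<rho> ** A = (0::complex^'n^'n)"
proof -
  have "(\<rho> ** A)$i$k = (\<rho> *v column k A)$i" for i k
    by (simp add: matrix_matrix_mult_def matrix_vector_mult_def column_def)
  then show ?thesis using assms by (simp add: vec_eq_iff)
qed

lemma Sop_ker:
  assumes psd: "psd \<rho>" and h: "cadj \<rho> = \<rho>" and S0: "Sop \<rho> A = 0"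
  shows "\<rho> ** A = 0" "A ** \<rho> = 0"
proof -
  have anti: "\<rho> ** A = - (A ** \<rho>)" using S0 by (simp add: Sop_def eq_neg_iff_add_eq_0)
  have t1: "trace (cadj A ** \<rho> ** A) = - trace (cadj (cadj A) ** \<rho> ** cadj A)"
  proof -
    have "trace (cadj A ** \<rho> ** A) = trace (cadj A ** (\<rho> ** A))" by (simp add: matrix_mul_assoc)
    also have "\<dots> = - trace (cadj A ** (A ** \<rho>))" by (simp add: anti matrix_neg_right trace_uminus)
    also have "trace (cadj A ** (A ** \<rho>)) = trace (A ** \<rho> ** cadj A)"
      by (rule trace_mul_sym)
    finally show ?thesis by simp
  qed
  have n1: "0 \<le> Re (trace (cadj A ** \<rho> ** A))" by (rule trace_sandwich_nonneg[OF psd])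
  have n2: "0 \<le> Re (trace (cadj (cadj A) ** \<rho> ** cadj A))" by (rule trace_sandwich_nonneg[OF psd])
  have "Re (trace (cadj A ** \<rho> ** A)) = 0" using t1 n1 n2 by simp
  then have "(\<Sum>k\<in>UNIV. Re (qf \<rho> (column k A))) = 0"
    unfolding trace_sandwich by (simp add: Re_sum)
  moreover have "\<And>k. 0 \<le> Re (qf \<rho> (column k A))" using psd by (simp add: psd_def)
  ultimately have "\<And>k. Re (qf \<rho> (column k A)) = 0"
    by (simp add: sum_nonneg_eq_0_iff)
  then have "\<And>k. \<rho> *v column k A = 0" using psd_zero[OF psd h] by blast
  then show r: "\<rho> ** A = 0" by (rule mult_zero_cols)
  show "A ** \<rho> = 0" using anti r by simp
qed

lemma herm_entry: assumes "cadj H = H" shows "cnj (H$i$j) = H$j$i"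
proof -
  have "(cadj H)$j$i = cnj (H$i$j)" by (simp add: cadj_def)
  then show ?thesis using assms by simp
qed

lemma orth_M:
  assumes h: "cadj \<rho> = \<rho>" and hM: "cadj M = M"
    and kerM: "\<And>x y. \<rho> *v x = 0 \<Longrightarrow> \<rho> *v y = 0 \<Longrightarrow> vdot x (M *v y) = 0"
    and A1: "\<rho> ** A = 0" and A2: "A ** \<rho> = 0"
  shows "Re (trace (cadj A ** M)) = 0"
proof -
  define H where "H = A + cadj A"
  have hH: "cadj H = H" by (simp add: H_def add.commute)
  have "\<rho> ** cadj A = cadj (A ** \<rho>)" by (simp add: cadj_mult h)
  then have rH: "\<rho> ** H = 0" by (simp add: H_def matrix_add_ldistrib A1 A2)
  have colH: "\<rho> *v column b H = 0" for b
  proof -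
    have "(\<rho> *v column b H)$i = (\<rho> ** H)$i$b" for i
      by (simp add: matrix_matrix_mult_def matrix_vector_mult_def column_def)
    then show ?thesis using rH by (simp add: vec_eq_iff)
  qed
  have HMH: "H ** M ** H = 0"
  proof -
    have "(H ** M ** H)$a$b = vdot (column a H) (M *v column b H)" for a b
      by (simp add: vdot_def matrix_matrix_mult_def matrix_vector_mult_def column_def herm_entry[OF hH]
          sum_distrib_left sum_distrib_right mult.assoc)
        (rule sum.swap)
    then show ?thesis using kerM colH by (simp add: vec_eq_iff)
  qed
  obtain G where G: "H ** G ** H = H" using ginv[OF hH] by blast
  have "trace (H ** M) = trace ((H ** G ** H) ** M)" using G by simp
  also have "\<dots> = trace (G ** (H ** M ** H))"
    by (metis matrix_mul_assoc trace_mul_sym)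
  also have "\<dots> = 0" using HMH by (simp add: trace_def)
  finally have tHM: "trace (H ** M) = 0" .
  have "trace (A ** M) = cnj (trace (cadj A ** M))"
  proof -
    have "cnj (trace (cadj A ** M)) = trace (cadj (cadj A ** M))" by (simp add: trace_cadj)
    also have "\<dots> = trace (M ** A)" by (simp add: cadj_mult hM)
    also have "\<dots> = trace (A ** M)" by (rule trace_mul_sym)
    finally show ?thesis by simp
  qed
  then have "trace (H ** M) = cnj (trace (cadj A ** M)) + trace (cadj A ** M)"
    by (simp add: H_def matrix_add_rdistrib' trace_add)
  then have "Re (cnj (trace (cadj A ** M)) + trace (cadj A ** M)) = 0" using tHM by simp
  then show ?thesis by simp
qed

lemma SLD_exists:
  assumes psd: "psd \<rho>" and h: "cadj \<rho> = \<rho>" and hM: "cadj M = M"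
    and kerM: "\<And>x y. \<rho> *v x = 0 \<Longrightarrow> \<rho> *v y = 0 \<Longrightarrow> vdot x (M *v y) = 0"
  shows "\<exists>L. is_SLD \<rho> M L"
proof -
  have "\<forall>A. Sop \<rho> A = 0 \<longrightarrow> A \<bullet> M = 0"
  proof (intro allI impI)
    fix A assume "Sop \<rho> A = 0"
    then have "Re (trace (cadj A ** M)) = 0"
      using Sop_ker[OF psd h] orth_M[OF h hM kerM] by blast
    then show "A \<bullet> M = 0" by (simp add: inner_cmat)
  qed
  then have "M \<in> orthogonal_comp (Sop \<rho> -` {0})"
    by (simp add: orthogonal_comp_def orthogonal_def)
  then obtain L0 where L0: "Sop \<rho> L0 = M" using range_Sop[OF h] by (metis imageE)
  define L1 where "L1 = 2 *\<^sub>R L0"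
  have SL1: "Sop \<rho> L1 = 2 *\<^sub>R M"
    using L0 linear_scale[OF Sop_linear, of \<rho> 2 L0] by (simp add: L1_def)
  have SL1': "Sop \<rho> (cadj L1) = 2 *\<^sub>R M"
  proof -
    have "Sop \<rho> (cadj L1) = cadj (Sop \<rho> L1)"
      by (simp add: Sop_def cadj_mult h add.commute)
    then show ?thesis using SL1 hM by simp
  qed
  define L where "L = (1/2) *\<^sub>R (L1 + cadj L1)"
  have "cadj L = L" by (simp add: L_def add.commute)
  moreover have "Sop \<rho> L = 2 *\<^sub>R M"
  proof -
    have e1: "Sop \<rho> L = (1/2) *\<^sub>R Sop \<rho> (L1 + cadj L1)"
      unfolding L_def by (rule linear_scale[OF Sop_linear])
    have e2: "Sop \<rho> (L1 + cadj L1) = Sop \<rho> L1 + Sop \<rho> (cadj L1)"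
      by (rule linear_add[OF Sop_linear])
    show ?thesis using e1 e2 SL1 SL1' by simp
  qed
  ultimately show ?thesis unfolding is_SLD_def Sop_def by auto
qed

lemma SLD_unique_val:
  assumes psd: "psd \<rho>" and h: "cadj \<rho> = \<rho>" and s1: "is_SLD \<rho> M L1" and s2: "is_SLD \<rho> M L2"
  shows "trace (\<rho> ** L1 ** L1) = trace (\<rho> ** L2 ** L2)"
proof -
  define D where "D = L1 - L2"
  have "Sop \<rho> D = 0"
    using s1 s2 unfolding is_SLD_def Sop_def D_def
    by (simp add: matrix_sub_ldistrib matrix_sub_rdistrib algebra_simps)
  then have D1: "\<rho> ** D = 0" and D2: "D ** \<rho> = 0" using Sop_ker[OF psd h] by auto
  have L1: "L1 = L2 + D" by (simp add: D_def)
  have "\<rho> ** L1 ** L1 = \<rho> ** L2 ** L2 + \<rho> ** L2 ** D + (\<rho> ** D) ** L2 + (\<rho> ** D) ** D"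
    unfolding L1 by (simp add: matrix_add_ldistrib matrix_add_rdistrib' matrix_mul_assoc add.assoc)
  also have "\<dots> = \<rho> ** L2 ** L2 + \<rho> ** L2 ** D" using D1 by simp
  finally have "trace (\<rho> ** L1 ** L1) = trace (\<rho> ** L2 ** L2) + trace (\<rho> ** L2 ** D)"
    by (simp add: trace_add)
  moreover have "trace (\<rho> ** L2 ** D) = trace ((D ** \<rho>) ** L2)"
    by (metis matrix_mul_assoc trace_mul_sym)
  ultimately show ?thesis using D2 by (simp add: trace_def)
qed

lemma QFI_eq:
  assumes psd: "psd \<rho>" and h: "cadj \<rho> = \<rho>" and s: "is_SLD \<rho> M L"
  shows "QFI \<rho> M = Re (trace (\<rho> ** L ** L))"
  unfolding QFI_def
proof (rule the_equality)
  show "\<exists>L'. is_SLD \<rho> M L' \<and> Re (trace (\<rho> ** L ** L)) = Re (trace (\<rho> ** L' ** L'))"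
    using s by blast
next
  fix f assume "\<exists>L'. is_SLD \<rho> M L' \<and> f = Re (trace (\<rho> ** L' ** L'))"
  then show "f = Re (trace (\<rho> ** L ** L))" using SLD_unique_val[OF psd h s] by auto
qed

lemma QFI_nonneg_aux:
  assumes psd: "psd \<rho>" and s: "is_SLD \<rho> M L"
  shows "0 \<le> Re (trace (\<rho> ** L ** L))"
proof -
  have hL: "cadj L = L" using s by (simp add: is_SLD_def)
  have "trace (\<rho> ** L ** L) = trace (cadj L ** \<rho> ** L)"
    using hL by (metis matrix_mul_assoc trace_mul_sym)
  then show ?thesis using trace_sandwich_nonneg[OF psd] by simp
qed

lemma QFI_CS:
  assumes psd: "psd \<rho>" and s: "is_SLD \<rho> M L" and hX: "cadj X = X"
  shows "(Re (trace (M ** X)))^2 \<le> Re (trace (\<rho> ** L ** L)) * Re (trace (\<rho> ** X ** X))"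
proof -
  have hL: "cadj L = L" and eq2: "2 *\<^sub>R M = \<rho> ** L + L ** \<rho>" using s by (auto simp: is_SLD_def)
  have c1: "trace (L ** \<rho> ** L) = trace (\<rho> ** L ** L)" by (metis matrix_mul_assoc trace_mul_sym)
  have c2: "trace (X ** \<rho> ** X) = trace (\<rho> ** X ** X)" by (metis matrix_mul_assoc trace_mul_sym)
  have c3: "trace (L ** \<rho> ** X) + trace (X ** \<rho> ** L) = 2 * trace (M ** X)"
  proof -
    have "trace (X ** \<rho> ** L) = trace (\<rho> ** L ** X)" by (metis matrix_mul_assoc trace_mul_sym)
    moreover have "trace ((2 *\<^sub>R M) ** X) = 2 *\<^sub>R trace (M ** X)"
      by (simp only: scaleR_mult_left trace_scaleR)
    moreover have "2 *\<^sub>R trace (M ** X) = 2 * trace (M ** X)"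
      by (simp add: scaleR_conv_of_real)
    ultimately show ?thesis
      by (simp add: eq2 matrix_add_rdistrib' trace_add add.commute)
  qed
  have "0 \<le> Re (trace (\<rho> ** L ** L)) + 2 * Re (trace (M ** X)) * t + Re (trace (\<rho> ** X ** X)) * t^2"
    for t :: real
  proof -
    define Y where "Y = L + t *\<^sub>R X"
    have "cadj Y = Y" by (simp add: Y_def hL hX)
    have "cadj Y ** \<rho> ** Y = L ** \<rho> ** L + t *\<^sub>R (L ** \<rho> ** X) + t *\<^sub>R (X ** \<rho> ** L)
        + (t * t) *\<^sub>R (X ** \<rho> ** X)"
      unfolding \<open>cadj Y = Y\<close> Y_def
      by (simp add: hL hX matrix_add_ldistrib matrix_add_rdistrib' scaleR_mult_left scaleR_mult_right algebra_simps)
    then have "trace (cadj Y ** \<rho> ** Y) = trace (\<rho> ** L ** L) + t *\<^sub>R (trace (L ** \<rho> ** X) + trace (X ** \<rho> ** L))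
        + (t * t) *\<^sub>R trace (\<rho> ** X ** X)"
      by (simp add: trace_add trace_scaleR c1 c2 scaleR_add_right)
    also have "\<dots> = trace (\<rho> ** L ** L) + t *\<^sub>R (2 * trace (M ** X)) + (t * t) *\<^sub>R trace (\<rho> ** X ** X)"
      by (simp only: c3)
    finally have "Re (trace (cadj Y ** \<rho> ** Y)) = Re (trace (\<rho> ** L ** L)) + 2 * Re (trace (M ** X)) * t
        + Re (trace (\<rho> ** X ** X)) * t^2"
      by (simp add: power2_eq_square)
    then show ?thesis using trace_sandwich_nonneg[OF psd, of Y] by simp
  qed
  from disc[OF this] show ?thesis .
qed


lemma norm_vec_le_sum: "norm (x::complex^'m) \<le> (\<Sum>i\<in>UNIV. cmod (x$i))"
  unfolding norm_vec_def by (rule L2_set_le_sum) simp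

lemma cadj_sum: "cadj (sum f S) = (\<Sum>x\<in>S. cadj (f x))"
  by (induction S rule: infinite_finite_induct) simp_all

lemma trace_zero[simp]: "trace (0::complex^'n^'n) = 0"
  by (simp add: trace_def)

lemma trace_sum: "trace (sum f S :: complex^'n^'n) = (\<Sum>x\<in>S. trace (f x))"
  by (induction S rule: infinite_finite_induct) (simp_all add: trace_add)

lemma qf_add: "qf (A + B) x = qf A x + qf B x"
  by (simp add: qf_def matrix_vector_mult_add_rdistrib vdot_add_right)

lemma qf_0: "qf 0 x = 0"
  by (simp add: qf_def vdot_def)

lemma qf_sum: "qf (sum f S) x = (\<Sum>i\<in>S. qf (f i) x)"
  by (induction S rule: infinite_finite_induct) (simp_all add: qf_add qf_0)

lemma qf_sandwich: "qf (A ** \<rho> ** cadj A) x = qf \<rho> (cadj A *v x)"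
  by (simp add: qf_def vdot_adj flip: matrix_vector_mul_assoc)

lemma channel_density:
  assumes tp: "trace_preserving K" and d: "density \<rho>"
  shows "density (channel K \<rho>)"
proof -
  have h: "cadj \<rho> = \<rho>" and p: "psd \<rho>" and t: "trace \<rho> = 1"
    using d density_psd by (auto simp: density_def)
  have ci: "cadj (K i ** \<rho> ** cadj (K i)) = K i ** \<rho> ** cadj (K i)" for i
    by (simp only: cadj_mult cadj_cadj h matrix_mul_assoc)
  have "cadj (channel K \<rho>) = channel K \<rho>"
    by (simp only: channel_def cadj_sum ci)
  moreover have "0 \<le> Re (qf (channel K \<rho>) x)" for x
    using p by (simp add: channel_def qf_sum qf_sandwich Re_sum sum_nonneg psd_def)
  moreover have "trace (channel K \<rho>) = 1"
  proof -
    have ti: "trace (K i ** \<rho> ** cadj (K i)) = trace (\<rho> ** (cadj (K i) ** K i))" for i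
    proof -
      have "trace ((K i ** \<rho>) ** cadj (K i)) = trace (cadj (K i) ** (K i ** \<rho>))" by (rule trace_mul_sym)
      also have "\<dots> = trace ((cadj (K i) ** K i) ** \<rho>)" by (simp only: matrix_mul_assoc)
      also have "\<dots> = trace (\<rho> ** (cadj (K i) ** K i))" by (rule trace_mul_sym)
      finally show ?thesis .
    qed
    have "trace (channel K \<rho>) = (\<Sum>i\<in>UNIV. trace (\<rho> ** (cadj (K i) ** K i)))"
      unfolding channel_def trace_sum using ti by simp
    also have "\<dots> = trace (\<rho> ** (\<Sum>i\<in>UNIV. cadj (K i) ** K i))"
      by (simp add: matrix_sum_left trace_sum)
    also have "\<dots> = 1" using tp t by (simp add: trace_preserving_def)
    finally show ?thesis .
  qed
  ultimately show ?thesis by (simp add: density_def qf_def vdot_def)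
qed

lemma channel_iter_density:
  assumes tp: "trace_preserving K" and d: "density \<rho>"
  shows "density ((channel K ^^ N) \<rho>)"
  by (induction N) (simp_all add: d channel_density[OF tp])

lemma density_herm: "density \<rho> \<Longrightarrow> cadj \<rho> = \<rho>"
  by (simp add: density_def)

lemma vdot_axis: "vdot (axis a 1) v = v$a"
proof -
  have "cnj (axis a 1 $ i) * v$i = (if i = a then v$a else 0)" for i by (simp add: axis_def)
  then show ?thesis by (simp add: vdot_def)
qed

lemma mv_axis: "(A *v axis b 1) $ i = A$i$b"
proof -
  have "A$i$j * axis b 1 $ j = (if j = b then A$i$b else 0)" for j by (simp add: axis_def)
  then show ?thesis by (simp add: matrix_vector_mult_def)
qed

lemma vdot_axis_mv: "vdot (axis a 1) (A *v axis b 1) = A$a$b"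
  by (simp add: vdot_axis mv_axis)

lemma qf_axis: "qf A (axis a 1) = A$a$a"
  by (simp add: qf_def vdot_axis_mv)

lemma density_diag:
  assumes d: "density \<rho>"
  shows "Im (\<rho>$a$a) = 0" "0 \<le> Re (\<rho>$a$a)" "Re (\<rho>$a$a) \<le> 1"
proof -
  have h: "cadj \<rho> = \<rho>" and p: "psd \<rho>" and t: "trace \<rho> = 1"
    using d density_psd by (auto simp: density_def)
  have "Im (cnj (\<rho>$a$a)) = Im (\<rho>$a$a)" using herm_entry[OF h, of a a] by simp
  then show "Im (\<rho>$a$a) = 0" by simp
  have nn: "0 \<le> Re (\<rho>$c$c)" for c using p unfolding psd_def by (metis qf_axis)
  then show "0 \<le> Re (\<rho>$a$a)" .
  have "Re (\<rho>$a$a) \<le> (\<Sum>c\<in>UNIV. Re (\<rho>$c$c))"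
    by (rule member_le_sum) (use nn in auto)
  also have "\<dots> = 1" using t by (simp add: trace_def flip: Re_sum)
  finally show "Re (\<rho>$a$a) \<le> 1" .
qed

lemma density_entry_bound:
  assumes d: "density \<rho>"
  shows "cmod (\<rho>$a$b) \<le> 1"
proof (cases "a = b")
  case True
  then show ?thesis using density_diag[OF d, of a]
    by (simp add: cmod_def)
next
  case False
  have h: "cadj \<rho> = \<rho>" and p: "psd \<rho>" and t: "trace \<rho> = 1"
    using d density_psd by (auto simp: density_def)
  show ?thesis
  proof (cases "\<rho>$a$b = 0")
    case True then show ?thesis by simp
  next
    case nz: False
    define z where "z = \<rho>$a$b"
    define w where "w = - cnj z / cmod z"
    have zz: "cnj z * z = of_real ((cmod z)^2)" by (metis complex_norm_square mult.commute)
    have cz: "cmod z \<noteq> 0" using nz z_def by simp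
    have "w * z = - (cnj z * z) / of_real (cmod z)" by (simp add: w_def)
    also have "\<dots> = - of_real (cmod z)" using zz cz by (simp add: power2_eq_square)
    finally have wz: "w * z = - of_real (cmod z)" .
    have wz': "cnj w * cnj z = - of_real (cmod z)"
    proof -
      have "cnj w * cnj z = cnj (w * z)" by simp
      then show ?thesis using wz by simp
    qed
    have rba: "\<rho>$b$a = cnj z" using herm_entry[OF h, of a b] z_def by simp
    have cw: "cmod w = 1" unfolding w_def using cz by (simp add: norm_divide)
    have ww: "cnj w * w = 1" using complex_norm_square[of w] cw by (simp add: mult.commute)
    have "qf \<rho> (axis a 1 + w *s axis b 1) = \<rho>$a$a + w * z + cnj w * cnj z + cnj w * w * \<rho>$b$b"
      unfolding qf_expand by (simp add: qf_axis vdot_axis_mv z_def rba)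
    also have "\<dots> = \<rho>$a$a + \<rho>$b$b - 2 * of_real (cmod z)"
      using wz wz' ww by simp
    finally have "0 \<le> Re (\<rho>$a$a + \<rho>$b$b - 2 * of_real (cmod z))"
      using p unfolding psd_def by metis
    then have "0 \<le> Re (\<rho>$a$a) + Re (\<rho>$b$b) - 2 * cmod z" by simp
    moreover have "Re (\<rho>$a$a) + Re (\<rho>$b$b) \<le> (\<Sum>c\<in>UNIV. Re (\<rho>$c$c))"
    proof -
      have "(\<Sum>c\<in>{a,b}. Re (\<rho>$c$c)) \<le> (\<Sum>c\<in>UNIV. Re (\<rho>$c$c))"
        by (rule sum_mono2) (use density_diag[OF d] in auto)
      then show ?thesis using False by simp
    qed
    moreover have "(\<Sum>c\<in>UNIV. Re (\<rho>$c$c)) = 1" using t by (simp add: trace_def flip: Re_sum)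
    moreover have "0 \<le> Re (\<rho>$a$a)" "0 \<le> Re (\<rho>$b$b)" using density_diag[OF d] by auto
    ultimately show ?thesis unfolding z_def by linarith
  qed
qed

lemma density_vecz_bound:
  fixes \<rho> :: "complex^'n^'n"
  assumes "density \<rho>" shows "norm (vecz \<rho>) \<le> real CARD('n \<times> 'n)"
proof -
  have b: "cmod (vecz \<rho> $ p) \<le> 1" for p
    by (simp add: vecz_def density_entry_bound[OF assms])
  have "norm (vecz \<rho>) \<le> (\<Sum>p\<in>UNIV. cmod (vecz \<rho> $ p))" by (rule norm_vec_le_sum)
  also have "\<dots> \<le> of_nat (card (UNIV::('n\<times>'n) set)) * 1"
    by (rule sum_bounded_above) (use b in auto)
  finally show ?thesis by simp
qed

definition outer :: "complex^'n \<Rightarrow> complex^'n^'n" where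
  "outer x = (\<chi> a b. x$a * cnj (x$b))"

lemma outer_density:
  assumes "vdot x x = 1" shows "density (outer x)"
proof -
  have "cadj (outer x) = outer x" by (simp add: outer_def cadj_def vec_eq_iff mult.commute)
  moreover have qo: "qf (outer x) y = vdot y x * vdot x y" for y
    by (simp add: qf_def vdot_def outer_def matrix_vector_mult_def sum_distrib_left sum_distrib_right ac_simps)
      (rule sum.swap)
  have "0 \<le> Re (qf (outer x) y)" for y
  proof -
    have "vdot y x * vdot x y = of_real ((cmod (vdot x y))^2)"
      using complex_norm_square[of "vdot x y"] vdot_cnj[of x y] by (simp add: mult.commute)
    then show ?thesis using qo by simp
  qed
  moreover have "trace (outer x) = 1"
    using assms by (simp add: trace_def outer_def vdot_def mult.commute)
  ultimately show ?thesis by (simp add: density_def qf_def vdot_def)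
qed


lemma sum_pairs: "(\<Sum>q\<in>UNIV. f q) = (\<Sum>c\<in>UNIV. \<Sum>d\<in>UNIV. f (c, d))"
  by (simp add: sum.cartesian_product)

lemma vecz_sandwich: "vecz (K ** \<rho> ** cadj K) = kron K (cconj K) *v vecz \<rho>"
proof -
  have "vecz (K ** \<rho> ** cadj K) $ (a, b) = (kron K (cconj K) *v vecz \<rho>) $ (a, b)" for a b
  proof -
    have "vecz (K ** \<rho> ** cadj K) $ (a, b) = (\<Sum>d\<in>UNIV. \<Sum>c\<in>UNIV. K$a$c * \<rho>$c$d * cnj (K$b$d))"
      by (simp add: vecz_def matrix_matrix_mult_def cadj_def sum_distrib_right)
    also have "\<dots> = (\<Sum>c\<in>UNIV. \<Sum>d\<in>UNIV. K$a$c * \<rho>$c$d * cnj (K$b$d))"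
      by (rule sum.swap)
    also have "\<dots> = (kron K (cconj K) *v vecz \<rho>) $ (a, b)"
      by (simp add: matrix_vector_mult_def kron_def cconj_def vecz_def sum_pairs ac_simps)
    finally show ?thesis .
  qed
  then show ?thesis by (simp add: vec_eq_iff)
qed

lemma vecz_add: "vecz (A + B) = vecz A + vecz B"
  by (simp add: vecz_def vec_eq_iff)

lemma vecz_zero[simp]: "vecz 0 = 0"
  by (simp add: vecz_def vec_eq_iff)

lemma vecz_sum: "vecz (sum f S) = (\<Sum>x\<in>S. vecz (f x))"
  by (induction S rule: infinite_finite_induct) (simp_all add: vecz_add)

lemma mv_sum_left: "(sum f S) *v (v::complex^'m) = (\<Sum>x\<in>S. f x *v v)"
  by (induction S rule: infinite_finite_induct) (simp_all add: matrix_vector_mult_add_rdistrib)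

lemma vecz_channel: "vecz (channel K \<rho>) = liouville K *v vecz \<rho>"
  by (simp add: channel_def liouville_def vecz_sum vecz_sandwich mv_sum_left)

lemma vecz_iter: "vecz ((channel K ^^ N) \<rho>) = mp (liouville K) N *v vecz \<rho>"
proof (induction N)
  case 0 then show ?case by simp
next
  case (Suc N) then show ?case by (simp add: vecz_channel matrix_vector_mul_assoc[symmetric])
qed

definition Eab :: "'n \<Rightarrow> 'n \<Rightarrow> complex^'n^'n" where
  "Eab a b = (\<chi> i j. if i = a \<and> j = b then 1 else 0)"

lemma vecz_Eab: "vecz (Eab a b) = axis (a, b) 1"
  by (auto simp: vecz_def Eab_def axis_def vec_eq_iff)

lemma ax: "(axis i (1::complex)) $ j = (if j = i then 1 else 0)"
  by (simp add: axis_def)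

definition uvec :: "'n \<Rightarrow> 'n \<Rightarrow> complex \<Rightarrow> complex^'n" where
  "uvec a b w = of_real (1 / sqrt 2) *s (axis a 1 + w *s axis b 1)"

lemma uvec_norm:
  assumes "a \<noteq> b" "cmod w = 1"
  shows "vdot (uvec a b w) (uvec a b w) = 1"
proof -
  have ww: "cnj w * w = 1" using complex_norm_square[of w] assms(2) by (simp add: mult.commute)
  then have ww': "w * cnj w = 1" by (simp add: mult.commute)
  have "vdot (axis a 1 + w *s axis b 1) (axis a 1 + w *s axis b 1) = 2"
    using assms(1) ww ww' by (simp add: vdot_add_left vdot_add_right vdot_smult_left vdot_smult_right vdot_axis ax)
  moreover have "(1/sqrt 2) * ((1/sqrt 2) * 2) = (1::real)" by simp
  then have "cnj (complex_of_real (1/sqrt 2)) * (complex_of_real (1/sqrt 2) * 2) = 1"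
    by (metis complex_cnj_complex_of_real of_real_1 of_real_mult of_real_numeral)
  ultimately show ?thesis
    unfolding uvec_def vdot_smult_left vdot_smult_right by simp
qed

lemma Eab_decomp:
  assumes "a \<noteq> b"
  shows "Eab a b = cscale (1/2) (outer (uvec a b 1)) + cscale (\<i>/2) (outer (uvec a b \<i>))
           + cscale (-1/2) (outer (uvec a b (-1))) + cscale (-\<i>/2) (outer (uvec a b (-\<i>)))"
proof -
  have s: "(complex_of_real (1 / sqrt 2)) * cnj (complex_of_real (1 / sqrt 2)) = 1/2"
    by (simp flip: of_real_mult)
  show ?thesis
    using assms
    by (auto simp: vec_eq_iff Eab_def cscale_def outer_def uvec_def axis_def s algebra_simps
        simp flip: of_real_mult)
qed

lemma dens_induct:
  fixes Q :: "complex^('n::finite \<times> 'n) \<Rightarrow> bool"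
  assumes Q0: "Q 0" and Qadd: "\<And>x y. Q x \<Longrightarrow> Q y \<Longrightarrow> Q (x + y)"
    and Qsm: "\<And>c x. Q x \<Longrightarrow> Q (c *s x)" and Qd: "\<And>\<rho>. density \<rho> \<Longrightarrow> Q (vecz \<rho>)"
  shows "Q v"
proof -
  have vcs: "vecz (cscale c A) = c *s vecz A" for c and A :: "complex^'n^'n"
    by (simp add: vecz_def cscale_def vec_eq_iff)
  have vadd: "vecz (A + B) = vecz A + vecz B" for A B :: "complex^'n^'n" by (rule vecz_add)
  have QE: "Q (axis p 1)" for p
  proof (cases p)
    case (Pair a b)
    show ?thesis
    proof (cases "a = b")
      case True
      have "vdot (axis a 1) (axis a (1::complex)) = 1" by (simp add: vdot_axis)
      then have "density (outer (axis a 1))" by (rule outer_density)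
      moreover have "outer (axis a 1) = Eab a b" using True
        by (auto simp: outer_def Eab_def axis_def vec_eq_iff)
      ultimately show ?thesis using Qd vecz_Eab Pair by metis
    next
      case False
      have d: "density (outer (uvec a b w))" if "cmod w = 1" for w
        by (rule outer_density, rule uvec_norm) (use False that in auto)
      have "axis p 1 = vecz (Eab a b)" by (simp only: Pair vecz_Eab)
      also have "\<dots> = (1/2) *s vecz (outer (uvec a b 1)) + (\<i>/2) *s vecz (outer (uvec a b \<i>))
           + (-1/2) *s vecz (outer (uvec a b (-1))) + (-\<i>/2) *s vecz (outer (uvec a b (-\<i>)))"
        unfolding Eab_decomp[OF False] by (simp only: vadd vcs)
      finally show ?thesis
        by (metis Qadd Qsm Qd d norm_one norm_ii norm_minus_cancel)
    qed
  qed
  have Qsum: "Q (\<Sum>p\<in>S. f p)" if "\<And>p. Q (f p)" for S :: "'x set" and f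
    using that by (induction S rule: infinite_finite_induct) (simp_all add: Q0 Qadd)
  have "v = (\<Sum>p\<in>UNIV. v$p *s axis p 1)"
  proof -
    have "v$x * axis x 1 $ q = (if x = q then v$q else 0)" for x q by (auto simp: ax)
    then have "(\<Sum>x\<in>UNIV. v$x * axis x 1 $ q) = v$q" for q by simp
    then show ?thesis by (simp add: vec_eq_iff sum_component)
  qed
  then show ?thesis using Qsum[of "\<lambda>p. v$p *s axis p 1" UNIV] QE Qsm by metis
qed

lemma norm_smult: "norm (c *s (x::complex^'m)) = cmod c * norm x"
  by (simp add: norm_vec_def norm_mult L2_set_right_distrib)

lemma power_bounded:
  fixes K :: "'k::finite \<Rightarrow> complex^'n^'n"
  assumes tp: "trace_preserving K"
  shows "\<exists>B. \<forall>N. norm (mp (liouville K) N *v v) \<le> B"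
proof (induction v rule: dens_induct)
  case 1 then show ?case by (intro exI[of _ 0]) simp
next
  case (2 x y)
  then obtain Bx By where "\<forall>N. norm (mp (liouville K) N *v x) \<le> Bx" "\<forall>N. norm (mp (liouville K) N *v y) \<le> By"
    by blast
  then have "norm (mp (liouville K) N *v (x + y)) \<le> Bx + By" for N
    by (simp add: matrix_vector_right_distrib) (meson add_mono norm_triangle_le)
  then show ?case by blast
next
  case (3 c x)
  then obtain Bx where "\<forall>N. norm (mp (liouville K) N *v x) \<le> Bx" by blast
  then have "norm (mp (liouville K) N *v (c *s x)) \<le> cmod c * Bx" for N
    by (simp add: vector_scalar_commute norm_smult mult_left_mono)
  then show ?case by blast
next
  case (4 \<rho>)
  have "norm (mp (liouville K) N *v vecz \<rho>) \<le> real CARD('n \<times> 'n)" for N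
    using density_vecz_bound[OF channel_iter_density[OF tp 4, of N]] vecz_iter by metis
  then show ?case by blast
qed


lemma C1_at: "f C1_differentiable_on U \<Longrightarrow> x \<in> U \<Longrightarrow>
    (f has_vector_derivative vector_derivative f (at x)) (at x)"
  by (simp add: C1_differentiable_on_eq vector_derivative_works)

lemma mv_scaleR_left: "(r *\<^sub>R (A::complex^'m^'k)) *v v = r *\<^sub>R (A *v v)"
  by (simp add: vec_eq_iff matrix_vector_mult_def scaleR_sum_right)

lemma mv_scaleR_right: "(A::complex^'m^'k) *v (r *\<^sub>R v) = r *\<^sub>R (A *v v)"
  by (simp add: vec_eq_iff matrix_vector_mult_def scaleR_sum_right)

lemma smult_add: "(c::complex) *s (x + y) = c *s x + c *s y"
  by (simp add: vec_eq_iff algebra_simps)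

lemma bb_mv: "bounded_bilinear (\<lambda>(A::complex^'m^'m) (v::complex^'m). A *v v)"
proof -
  have "bilinear (\<lambda>(A::complex^'m^'m) (v::complex^'m). A *v v)"
    unfolding bilinear_def
    by (auto intro!: linearI simp: matrix_vector_mult_add_rdistrib matrix_vector_right_distrib
        mv_scaleR_left mv_scaleR_right)
  then show ?thesis by (simp add: bilinear_conv_bounded_bilinear)
qed

lemma bb_sm: "bounded_bilinear (\<lambda>(c::complex) (v::complex^'m). c *s v)"
proof -
  have "bilinear (\<lambda>(c::complex) (v::complex^'m). c *s v)"
    unfolding bilinear_def
    by (auto intro!: linearI simp: vec_eq_iff algebra_simps)
  then show ?thesis by (simp add: bilinear_conv_bounded_bilinear)
qed

lemma bl_vecz: "bounded_linear (vecz :: complex^'n^'n \<Rightarrow> _)"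
proof -
  have "linear (vecz :: complex^'n^'n \<Rightarrow> _)"
    by (auto intro!: linearI simp: vecz_def vec_eq_iff)
  then show ?thesis by (simp add: linear_conv_bounded_linear)
qed

lemma bl_unvecz: "bounded_linear (unvecz :: _ \<Rightarrow> complex^'n^'n)"
proof -
  have "linear (unvecz :: _ \<Rightarrow> complex^'n^'n)"
    by (auto intro!: linearI simp: unvecz_def vec_eq_iff)
  then show ?thesis by (simp add: linear_conv_bounded_linear)
qed

lemma bl_cadj: "bounded_linear (cadj :: complex^'n^'n \<Rightarrow> _)"
proof -
  have "linear (cadj :: complex^'n^'n \<Rightarrow> _)"
    by (auto intro!: linearI)
  then show ?thesis by (simp add: linear_conv_bounded_linear)
qed

lemma vsc: "((r::real) *\<^sub>R (y::complex^'m))$i = of_real r * y$i"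
  by (subst vector_scaleR_component) (simp add: scaleR_conv_of_real)

lemma qf_scaleR: "qf (r *\<^sub>R A) x = of_real r * qf A x"
  unfolding qf_def mv_scaleR_left vdot_def vsc by (simp add: sum_distrib_left ac_simps)

lemma bl_Re_qf: "bounded_linear (\<lambda>A::complex^'n^'n. Re (qf A x))"
proof -
  have "linear (\<lambda>A::complex^'n^'n. Re (qf A x))"
    by (auto intro!: linearI simp: qf_add qf_scaleR)
  then show ?thesis by (simp add: linear_conv_bounded_linear)
qed

primrec Dn :: "complex^'m^'m \<Rightarrow> complex^'m^'m \<Rightarrow> nat \<Rightarrow> complex^'m \<Rightarrow> complex^'m" where
  "Dn T0 T1 0 v = 0"
| "Dn T0 T1 (Suc N) v = T1 *v (mp T0 N *v v) + T0 *v Dn T0 T1 N v"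

lemma deriv_iter:
  fixes T :: "real \<Rightarrow> complex^'m^'m" and w :: "real \<Rightarrow> complex^'m"
  assumes T: "(T has_vector_derivative T1) (at x)" and w: "(w has_vector_derivative w1) (at x)"
  shows "((\<lambda>\<theta>. mp (T \<theta>) N *v w \<theta>) has_vector_derivative
           (Dn (T x) T1 N (w x) + mp (T x) N *v w1)) (at x)"
proof (induction N)
  case 0
  then show ?case using w by simp
next
  case (Suc N)
  have "((\<lambda>\<theta>. T \<theta> *v (mp (T \<theta>) N *v w \<theta>)) has_vector_derivative
      (T x *v (Dn (T x) T1 N (w x) + mp (T x) N *v w1) + T1 *v (mp (T x) N *v w x))) (at x)"
    by (rule bounded_bilinear.has_vector_derivative[OF bb_mv T Suc.IH])
  moreover have "T x *v (Dn (T x) T1 N (w x) + mp (T x) N *v w1) + T1 *v (mp (T x) N *v w x)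
      = Dn (T x) T1 (Suc N) (w x) + mp (T x) (Suc N) *v w1"
    by (simp add: matrix_vector_right_distrib matrix_vector_mul_assoc[symmetric] algebra_simps)
  moreover have "(\<lambda>\<theta>. T \<theta> *v (mp (T \<theta>) N *v w \<theta>)) = (\<lambda>\<theta>. mp (T \<theta>) (Suc N) *v w \<theta>)"
    by (simp add: matrix_vector_mul_assoc)
  ultimately show ?case by simp
qed

lemma Dn_add: "Dn T0 T1 N (x + y) = Dn T0 T1 N x + Dn T0 T1 N y"
  by (induction N) (simp_all add: matrix_vector_right_distrib algebra_simps)

lemma Dn_smult: "Dn T0 T1 N (c *s x) = c *s Dn T0 T1 N x"
  by (induction N) (simp_all add: vector_scalar_commute smult_add)

lemma Dn_diff: "Dn T0 T1 N (x - y) = Dn T0 T1 N x - Dn T0 T1 N y"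
  using Dn_add[of T0 T1 N "x - y" y] by (simp add: algebra_simps)

lemma qf_herm_real:
  assumes "cadj M = M" shows "Im (qf M z) = 0"
proof -
  have "qf M z = cnj (qf M z)"
    unfolding qf_def by (metis vdot_adj assms vdot_cnj)
  then show ?thesis by (metis cnj.simps(2) neg_equal_zero)
qed

lemma polar_kernel:
  assumes hM: "cadj M = M"
    and z: "\<And>z. \<rho> *v z = 0 \<Longrightarrow> qf M z = 0"
    and x: "\<rho> *v x = 0" and y: "\<rho> *v y = 0"
  shows "vdot x (M *v y) = 0"
proof -
  define w where "w = vdot x (M *v y)"
  have yx: "vdot y (M *v x) = cnj w"
    unfolding w_def by (metis vdot_adj hM vdot_cnj)
  have k: "\<rho> *v (x + c *s y) = 0" for c
    using x y by (simp add: matrix_vector_right_distrib vector_scalar_commute)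
  have "qf M (x + c *s y) = c * w + cnj c * cnj w" for c
    using z[OF x] z[OF y] by (simp add: qf_expand yx w_def)
  then have e: "c * w + cnj c * cnj w = 0" for c using z[OF k] by metis
  have "Re w = 0" using e[of 1] by (metis complex_add_cnj complex_cnj_one mult_1 of_real_eq_0_iff
        mult_eq_0_iff zero_neq_numeral Re_complex_of_real zero_complex.sel(1))
  moreover have "Im w = 0"
  proof -
    have "\<i> * w + cnj \<i> * cnj w = 0" by (rule e)
    then have "Re (\<i> * w + cnj \<i> * cnj w) = 0" by simp
    then show ?thesis by simp
  qed
  ultimately show ?thesis unfolding w_def by (simp add: complex_eq_iff)
qed

lemma deriv_psd_kernel:
  fixes \<rho> :: "real \<Rightarrow> complex^'n^'n"
  assumes d: "(\<rho> has_vector_derivative M) (at x)"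
    and psd: "\<And>\<theta>. psd (\<rho> \<theta>)"
    and hM: "cadj M = M"
    and z: "\<rho> x *v z = 0"
  shows "qf M z = 0"
proof -
  have "((\<lambda>\<theta>. Re (qf (\<rho> \<theta>) z)) has_vector_derivative Re (qf M z)) (at x)"
    by (rule bounded_linear.has_vector_derivative[OF bl_Re_qf d])
  then have D: "((\<lambda>\<theta>. Re (qf (\<rho> \<theta>) z)) has_real_derivative Re (qf M z)) (at x)"
    by (simp add: has_real_derivative_iff_has_vector_derivative)
  have "Re (qf (\<rho> x) z) = 0" using z by (simp add: qf_def vdot_def)
  then have "\<forall>y. \<bar>x - y\<bar> < 1 \<longrightarrow> Re (qf (\<rho> x) z) \<le> Re (qf (\<rho> y) z)"
    using psd by (simp add: psd_def)
  then have "Re (qf M z) = 0" using DERIV_local_min[OF D, of 1] by simp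
  moreover have "Im (qf M z) = 0" by (rule qf_herm_real[OF hM])
  ultimately show ?thesis by (simp add: complex_eq_iff)
qed


locale ps =
  fixes T0 :: "complex^'m::finite^'m" and lm :: complex and r :: "'p::finite \<Rightarrow> complex^'m"
    and lam0 :: "'p \<Rightarrow> complex" and j :: 'p
  assumes pb: "\<And>v. \<exists>B. \<forall>N. norm (mp T0 N *v v) \<le> B"
    and lm1: "cmod lm = 1"
    and eig0: "\<And>i. T0 *v r i = lam0 i *s r i"
    and indep: "\<And>c. (\<Sum>i\<in>UNIV. c i *s r i) = 0 \<Longrightarrow> \<forall>i. c i = 0"
    and complete: "\<And>v. T0 *v v = lm *s v \<Longrightarrow> \<exists>c. v = (\<Sum>i\<in>UNIV. c i *s r i)"
    and jlm: "lam0 j = lm"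
begin

definition f :: "complex^'m \<Rightarrow> complex^'m" where "f v = T0 *v v - lm *s v"

lemma lm0: "lm \<noteq> 0" using lm1 by auto

lemma smult_diff: "(c::complex) *s (x - y) = c *s x - c *s y"
  by (simp add: vec_eq_iff algebra_simps)

lemma f_add: "f (x + y) = f x + f y"
  by (simp add: f_def matrix_vector_right_distrib smult_add)
lemma f_diff: "f (x - y) = f x - f y"
  by (simp add: f_def matrix_vector_mult_diff_distrib smult_diff)
lemma f_smult: "f (c *s x) = c *s f x"
  by (simp add: f_def vector_scalar_commute smult_diff vector_smult_assoc mult.commute)
lemma f_zero: "f 0 = 0" by (simp add: f_def vec_eq_iff)

lemma scaleR_smult: "(s::real) *\<^sub>R (x::complex^'m) = of_real s *s x"
  by (rule vec_eq_iff[THEN iffD2]) (simp del: vector_scaleR_component add: vsc)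

lemma f_linear: "linear f"
  by (rule linearI) (simp_all add: f_add scaleR_smult f_smult)

lemma f_sum: "f (sum g S) = (\<Sum>x\<in>S. f (g x))"
  by (rule linear_sum[OF f_linear])

lemma mp_eig: "T0 *v a = lm *s a \<Longrightarrow> mp T0 N *v a = lm^N *s a"
  by (induction N) (simp_all add: matrix_vector_mul_assoc[symmetric] vector_scalar_commute vector_smult_assoc
      mult.commute)

lemma ker_range: assumes "f v = 0" "v = f u" shows "v = 0"
proof -
  have Tv: "T0 *v v = lm *s v" using assms(1) by (simp add: f_def)
  have Tu: "T0 *v u = lm *s u + v" using assms(2) by (simp add: f_def)
  have it: "mp T0 N *v u = lm^N *s (u + (of_nat N / lm) *s v)" for N
  proof (induction N)
    case 0 then show ?case by (simp add: vec_eq_iff)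
  next
    case (Suc N)
    have "mp T0 (Suc N) *v u = T0 *v (mp T0 N *v u)" by (simp add: matrix_vector_mul_assoc)
    also have "\<dots> = lm^N *s (lm *s u + v + (of_nat N / lm) *s (lm *s v))"
      by (simp add: Suc vector_scalar_commute smult_add matrix_vector_right_distrib Tu Tv)
    also have "\<dots> = lm^(Suc N) *s (u + (of_nat (Suc N) / lm) *s v)"
      using lm0 by (simp add: vec_eq_iff field_simps)
    finally show ?case .
  qed
  obtain B where B: "\<And>N. norm (mp T0 N *v u) \<le> B" using pb by blast
  have "real N * norm v \<le> B + norm u" for N
  proof -
    have "norm (mp T0 N *v u) = cmod (lm^N) * norm (u + (of_nat N / lm) *s v)"
      by (simp only: it norm_smult)
    then have "norm (mp T0 N *v u) = norm (u + (of_nat N / lm) *s v)"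
      using lm1 by (simp add: norm_power)
    then have "norm (u + (of_nat N / lm) *s v) \<le> B" using B by metis
    moreover have "norm ((of_nat N / lm) *s v) = real N * norm v"
      using lm1 by (simp add: norm_smult norm_divide)
    moreover have "norm ((of_nat N / lm) *s v) \<le> norm (u + (of_nat N / lm) *s v) + norm u"
      by (metis add_diff_cancel_left' norm_triangle_ineq4 add.commute)
    ultimately show ?thesis by linarith
  qed
  show "v = 0"
  proof (rule ccontr)
    assume "v \<noteq> 0"
    then have nv: "norm v > 0" by simp
    obtain N where "(B + norm u) / norm v < real N" using reals_Archimedean2 by blast
    then have "B + norm u < real N * norm v" using nv by (simp add: field_simps)
    then show False using \<open>real N * norm v \<le> B + norm u\<close> by (meson not_le)
  qed
qed

lemma f_onto: "\<exists>u. f v = f (f u)"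
proof -
  have sub: "subspace (range f)" using f_linear by (simp add: linear_subspace_image)
  have inj: "inj_on f (span (range f))"
  proof -
    have ir: "inj_on f (range f)"
    proof (rule inj_onI)
      fix x y assume "x \<in> range f" "y \<in> range f" "f x = f y"
      then obtain a b where "x = f a" "y = f b" by auto
      then have "x - y = f (a - b)" by (simp add: f_diff)
      moreover have "f (x - y) = 0" using \<open>f x = f y\<close> by (simp add: f_diff)
      ultimately have "x - y = 0" using ker_range by blast
      then show "x = y" by simp
    qed
    have sp: "span (range f) = range f" using sub span_eq_iff by blast
    show ?thesis unfolding sp by (rule ir)
  qed
  have "dim (f ` range f) = dim (range f)" by (rule dim_image_eq[OF f_linear inj])
  moreover have "subspace (f ` range f)" using f_linear sub by (simp add: linear_subspace_image)
  moreover have "f ` range f \<subseteq> range f" by auto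
  ultimately have "f ` range f = range f" using sub by (metis order_refl subspace_dim_equal)
  then have "f v \<in> f ` range f" by auto
  then show ?thesis by auto
qed

lemma decomp: "\<exists>a u. v = a + f u \<and> f a = 0"
proof -
  obtain u where "f v = f (f u)" using f_onto by blast
  then have "f (v - f u) = 0" by (simp add: f_diff)
  then show ?thesis by (metis diff_add_cancel)
qed

lemma f_r: "f (r i) = (lam0 i - lm) *s r i"
  by (simp add: f_def eig0 vector_sub_rdistrib)

lemma f_sum_r: "f (\<Sum>i\<in>UNIV. c i *s r i) = (\<Sum>i\<in>UNIV. (c i * (lam0 i - lm)) *s r i)"
  by (simp only: f_sum f_smult f_r vector_smult_assoc)

lemma ker_coeffs:
  assumes "f a = 0"
  shows "\<exists>c. a = (\<Sum>i\<in>UNIV. c i *s r i) \<and> (\<forall>i. c i \<noteq> 0 \<longrightarrow> lam0 i = lm)"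
proof -
  have "T0 *v a = lm *s a" using assms by (simp add: f_def)
  then obtain c where c: "a = (\<Sum>i\<in>UNIV. c i *s r i)" using complete by blast
  then have "(\<Sum>i\<in>UNIV. (c i * (lam0 i - lm)) *s r i) = 0" using assms f_sum_r by simp
  then have "\<forall>i. c i * (lam0 i - lm) = 0" using indep[of "\<lambda>i. c i * (lam0 i - lm)"] by blast
  then show ?thesis using c by auto
qed

lemma coeff_unique:
  assumes "(\<Sum>i\<in>UNIV. c i *s r i) = (\<Sum>i\<in>UNIV. c' i *s r i)" shows "c = c'"
proof -
  have "(\<Sum>i\<in>UNIV. (c i - c' i) *s r i) = 0"
    using assms by (simp add: vector_sub_rdistrib sum_subtractf)
  then show ?thesis using indep by fastforce
qed

definition ell :: "complex^'m \<Rightarrow> complex" where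
  "ell v = (THE z. \<exists>a u c. v = a + f u \<and> f a = 0 \<and> a = (\<Sum>i\<in>UNIV. c i *s r i) \<and> z = c j)"

lemma ell_eq:
  assumes "v = a + f u" "f a = 0" "a = (\<Sum>i\<in>UNIV. c i *s r i)"
  shows "ell v = c j"
  unfolding ell_def
proof (rule the_equality)
  show "\<exists>a u c'. v = a + f u \<and> f a = 0 \<and> a = (\<Sum>i\<in>UNIV. c' i *s r i) \<and> c j = c' j"
    using assms by blast
next
  fix z assume "\<exists>a' u' c'. v = a' + f u' \<and> f a' = 0 \<and> a' = (\<Sum>i\<in>UNIV. c' i *s r i) \<and> z = c' j"
  then obtain a' u' c' where h: "v = a' + f u'" "f a' = 0" "a' = (\<Sum>i\<in>UNIV. c' i *s r i)" "z = c' j"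
    by blast
  have "a - a' = f (u' - u)" using h(1) assms(1) by (simp add: f_diff algebra_simps)
  moreover have "f (a - a') = 0" using h(2) assms(2) by (simp add: f_diff)
  ultimately have "a = a'" using ker_range by fastforce
  then have "c = c'" using coeff_unique assms(3) h(3) by simp
  then show "z = c j" using h(4) by simp
qed

lemma ell_exists: "\<exists>a u c. v = a + f u \<and> f a = 0 \<and> a = (\<Sum>i\<in>UNIV. c i *s r i)
    \<and> (\<forall>i. c i \<noteq> 0 \<longrightarrow> lam0 i = lm)"
proof -
  obtain a u where "v = a + f u" "f a = 0" using decomp by blast
  then show ?thesis using ker_coeffs by blast
qed

lemma sum_smult_add: "(\<Sum>i\<in>UNIV. c i *s r i) + (\<Sum>i\<in>UNIV. d i *s r i) = (\<Sum>i\<in>UNIV. (c i + d i) *s r i)"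
  by (simp add: vector_sadd_rdistrib sum.distrib)

lemma sum_smult_smult: "z *s (\<Sum>i\<in>UNIV. c i *s r i) = (\<Sum>i\<in>UNIV. (z * c i) *s r i)"
  by (simp add: vec_eq_iff sum_distrib_left mult.assoc)

lemma ell_add: "ell (x + y) = ell x + ell y"
proof -
  obtain a u c where x: "x = a + f u" "f a = 0" "a = (\<Sum>i\<in>UNIV. c i *s r i)" using ell_exists by blast
  obtain b w d where y: "y = b + f w" "f b = 0" "b = (\<Sum>i\<in>UNIV. d i *s r i)" using ell_exists by blast
  have "x + y = (a + b) + f (u + w)" using x y by (simp add: f_add algebra_simps)
  moreover have "f (a + b) = 0" using x y by (simp add: f_add)
  moreover have "a + b = (\<Sum>i\<in>UNIV. (\<lambda>i. c i + d i) i *s r i)" using x y sum_smult_add by simp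
  ultimately have "ell (x + y) = c j + d j" by (rule ell_eq)
  then show ?thesis using ell_eq[OF x] ell_eq[OF y] by simp
qed

lemma ell_smult: "ell (z *s x) = z * ell x"
proof -
  obtain a u c where x: "x = a + f u" "f a = 0" "a = (\<Sum>i\<in>UNIV. c i *s r i)" using ell_exists by blast
  have "z *s x = z *s a + f (z *s u)" using x by (simp add: f_smult smult_add)
  moreover have "f (z *s a) = 0" using x(2) by (simp add: f_smult)
  moreover have "z *s a = (\<Sum>i\<in>UNIV. (\<lambda>i. z * c i) i *s r i)" using x sum_smult_smult by simp
  ultimately have "ell (z *s x) = z * c j" by (rule ell_eq)
  then show ?thesis using ell_eq[OF x] by simp
qed

lemma ell_zero: "ell 0 = 0"
  using ell_smult[of 0 0] by (simp add: vec_eq_iff)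

lemma ell_sum: "ell (sum g S) = (\<Sum>x\<in>S. ell (g x))"
  by (induction S rule: infinite_finite_induct) (simp_all add: ell_zero ell_add)

lemma ell_diff: "ell (x - y) = ell x - ell y"
  using ell_add[of "x - y" y] by simp

lemma ell_f: "ell (f u) = 0"
proof -
  have "ell (f u) = (\<lambda>i::'p. 0::complex) j"
    by (rule ell_eq[of "f u" 0 u "\<lambda>i. 0"]) (simp_all add: f_zero vec_eq_iff)
  then show ?thesis by simp
qed

lemma ell_T0: "ell (T0 *v v) = lm * ell v"
proof -
  have "T0 *v v = lm *s v + f v" by (simp add: f_def)
  then show ?thesis by (simp add: ell_add ell_smult ell_f)
qed

lemma ell_mp: "ell (mp T0 N *v v) = lm^N * ell v"
  by (induction N) (simp_all add: matrix_vector_mul_assoc[symmetric] ell_T0)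

lemma ell_ker: assumes "f a = 0" "a = (\<Sum>i\<in>UNIV. c i *s r i)" shows "ell a = c j"
  using ell_eq[of a a 0 c] assms f_zero by simp

lemma ell_r: assumes "lam0 i = lm" shows "ell (r i) = (if i = j then 1 else 0)"
proof -
  have fr: "f (r i) = 0" using assms by (simp add: f_def eig0 vec_eq_iff)
  have "r i = (\<Sum>k\<in>UNIV. (\<lambda>k. if k = i then 1 else 0) k *s r k)"
  proof -
    have "(if k = i then 1 else 0) *s r k = (if k = i then r i else 0)" for k
      by (simp add: vec_eq_iff)
    then show ?thesis by simp
  qed
  from ell_ker[OF fr this] show ?thesis by auto
qed

lemma ell_rj: "ell (r j) = 1" using ell_r[OF jlm] by simp

lemma ell_repr: "ell w = (\<Sum>p\<in>UNIV. w$p * ell (axis p 1))"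
proof -
  have "w = (\<Sum>p\<in>UNIV. w$p *s axis p 1)"
  proof -
    have "w$x * axis x 1 $ q = (if x = q then w$q else 0)" for x q by (auto simp: ax)
    then have "(\<Sum>x\<in>UNIV. w$x * axis x 1 $ q) = w$q" for q by simp
    then show ?thesis by (simp add: vec_eq_iff sum_component)
  qed
  then have "ell w = ell (\<Sum>p\<in>UNIV. w$p *s axis p 1)" by simp
  also have "\<dots> = (\<Sum>p\<in>UNIV. w$p * ell (axis p 1))" by (simp add: ell_sum ell_smult)
  finally show ?thesis .
qed

lemma ell_bl: "bounded_linear ell"
proof -
  have "linear ell" by (rule linearI) (simp_all add: ell_add scaleR_smult ell_smult scaleR_conv_of_real)
  then show ?thesis by (simp add: linear_conv_bounded_linear)
qed

end


lemma mv_sum_right: "(A::complex^'m^'k) *v sum g S = (\<Sum>x\<in>S. A *v g x)"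
  by (induction S rule: infinite_finite_induct) (simp_all add: matrix_vector_right_distrib)

locale ps2 = ps T0 lm r lam0 j for T0 :: "complex^'m::finite^'m" and lm r and lam0 :: "'p::finite \<Rightarrow> complex" and j +
  fixes T1 :: "complex^'m^'m" and rd :: "'p \<Rightarrow> complex^'m" and lamd :: "'p \<Rightarrow> complex"
  assumes deq: "\<And>i. T1 *v r i + T0 *v rd i = lamd i *s r i + lam0 i *s rd i"
begin

lemma ell_T1_r: assumes "lam0 i = lm" shows "ell (T1 *v r i) = (if i = j then lamd i else 0)"
proof -
  have "T1 *v r i = lamd i *s r i + lam0 i *s rd i - T0 *v rd i" using deq[of i] by (simp add: algebra_simps)
  then have "ell (T1 *v r i) = lamd i * ell (r i) + lm * ell (rd i) - lm * ell (rd i)"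
    using assms by (simp add: ell_add ell_diff ell_smult ell_T0)
  then show ?thesis using ell_r[OF assms] by simp
qed

lemma ell_T1_ker: assumes "f a = 0" shows "ell (T1 *v a) = lamd j * ell a"
proof -
  obtain c where c: "a = (\<Sum>i\<in>UNIV. c i *s r i)" "\<forall>i. c i \<noteq> 0 \<longrightarrow> lam0 i = lm"
    using ker_coeffs[OF assms] by blast
  have "ell (T1 *v a) = (\<Sum>i\<in>UNIV. c i * ell (T1 *v r i))"
    unfolding c(1) by (simp add: mv_sum_right vector_scalar_commute ell_sum ell_smult)
  also have "\<dots> = (\<Sum>i\<in>UNIV. if i = j then c j * lamd j else 0)"
  proof (rule sum.cong[OF refl])
    fix i
    show "c i * ell (T1 *v r i) = (if i = j then c j * lamd j else 0)"
    proof (cases "c i = 0")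
      case True
      then show ?thesis by auto
    next
      case False
      then have "lam0 i = lm" using c(2) by blast
      then show ?thesis using ell_T1_r by auto
    qed
  qed
  also have "\<dots> = c j * lamd j" by simp
  finally show ?thesis using ell_ker[OF assms c(1)] by simp
qed

lemma Dn_ker: assumes "f a = 0"
  shows "ell (Dn T0 T1 N a) = of_nat N * lm^N * (lamd j * ell a) / lm"
proof (induction N)
  case 0 then show ?case by (simp add: ell_zero)
next
  case (Suc N)
  have Ta: "T0 *v a = lm *s a" using assms by (simp add: f_def)
  have "ell (Dn T0 T1 (Suc N) a) = ell (T1 *v (lm^N *s a)) + lm * ell (Dn T0 T1 N a)"
    by (simp add: mp_eig[OF Ta] ell_add ell_T0)
  also have "\<dots> = lm^N * (lamd j * ell a) + lm * (of_nat N * lm^N * (lamd j * ell a) / lm)"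
    by (simp add: vector_scalar_commute ell_smult ell_T1_ker[OF assms] Suc)
  also have "\<dots> = of_nat (Suc N) * lm^(Suc N) * (lamd j * ell a) / lm"
    using lm0 by (simp add: field_simps)
  finally show ?case .
qed

lemma Dn_range:
  "ell (Dn T0 T1 N (T0 *v u)) - lm * ell (Dn T0 T1 N u)
     = ell (T1 *v (mp T0 N *v u)) - lm^N * ell (T1 *v u)"
proof (induction N)
  case 0 then show ?case by (simp add: ell_zero)
next
  case (Suc N)
  have mpeq: "mp T0 N *v (T0 *v u) = mp T0 (Suc N) *v u"
    by (simp only: mp_Suc_right matrix_vector_mul_assoc)
  have e1: "ell (Dn T0 T1 (Suc N) (T0 *v u)) = ell (T1 *v (mp T0 N *v (T0 *v u))) + lm * ell (Dn T0 T1 N (T0 *v u))"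
    by (simp only: Dn.simps ell_add ell_T0)
  have e2: "ell (Dn T0 T1 (Suc N) u) = ell (T1 *v (mp T0 N *v u)) + lm * ell (Dn T0 T1 N u)"
    by (simp only: Dn.simps ell_add ell_T0)
  have e3: "lm * (ell (Dn T0 T1 N (T0 *v u)) - lm * ell (Dn T0 T1 N u))
      = lm * (ell (T1 *v (mp T0 N *v u)) - lm^N * ell (T1 *v u))"
    using Suc.IH by simp
  show ?case unfolding e1 e2 mpeq using e3 by (simp add: algebra_simps)
qed

lemma main_est: "\<exists>C. \<forall>N. cmod (ell (Dn T0 T1 N v) - of_nat N * lm^N * (lamd j * ell v) / lm) \<le> C"
proof -
  obtain a u where v: "v = a + f u" "f a = 0" using decomp by blast
  have ev: "ell v = ell a" using v by (simp add: ell_add ell_f)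
  define g where "g k = ell (T1 *v (mp T0 k *v u))" for k
  have eq: "ell (Dn T0 T1 N v) - of_nat N * lm^N * (lamd j * ell v) / lm = g N - lm^N * g 0" for N
  proof -
    have "Dn T0 T1 N v = Dn T0 T1 N a + (Dn T0 T1 N (T0 *v u) - lm *s Dn T0 T1 N u)"
      using v by (simp add: f_def Dn_add Dn_diff Dn_smult)
    then have "ell (Dn T0 T1 N v) = ell (Dn T0 T1 N a) + (ell (Dn T0 T1 N (T0 *v u)) - lm * ell (Dn T0 T1 N u))"
      by (simp add: ell_add ell_diff ell_smult)
    then show ?thesis using Dn_ker[OF v(2)] Dn_range[of N u] ev by (simp add: g_def)
  qed
  have bl: "bounded_linear (\<lambda>w. ell (T1 *v w))"
    by (rule bounded_linear_compose[OF ell_bl matrix_vector_mul_bounded_linear])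
  obtain K where K: "K > 0" "\<And>w. norm (ell (T1 *v w)) \<le> norm w * K"
    using bounded_linear.pos_bounded[OF bl] by blast
  obtain B where B: "\<And>N. norm (mp T0 N *v u) \<le> B" using pb by blast
  have gb: "cmod (g N) \<le> B * K" for N
    using K(2)[of "mp T0 N *v u"] B[of N] K(1) unfolding g_def by (meson mult_right_mono less_imp_le order_trans)
  have "cmod (g N - lm^N * g 0) \<le> 2 * (B * K)" for N
  proof -
    have "cmod (g N - lm^N * g 0) \<le> cmod (g N) + cmod (lm^N * g 0)" by (rule norm_triangle_ineq4)
    also have "cmod (lm^N * g 0) = cmod (g 0)" using lm1 by (simp add: norm_mult norm_power)
    finally show ?thesis using gb[of N] gb[of 0] by simp
  qed
  then show ?thesis using eq by metis
qed

end


lemma density_trace_bound: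
  fixes \<rho> Y :: "complex^'n^'n"
  assumes "density \<rho>"
  shows "Re (trace (\<rho> ** Y)) \<le> (\<Sum>a\<in>UNIV. \<Sum>b\<in>UNIV. cmod (Y$b$a))"
proof -
  have eq: "trace (\<rho> ** Y) = (\<Sum>a\<in>UNIV. \<Sum>b\<in>UNIV. \<rho>$a$b * Y$b$a)"
    by (simp add: trace_def matrix_matrix_mult_def)
  have "Re (trace (\<rho> ** Y)) \<le> cmod (trace (\<rho> ** Y))" by (rule complex_Re_le_cmod)
  also have "\<dots> = cmod (\<Sum>a\<in>UNIV. \<Sum>b\<in>UNIV. \<rho>$a$b * Y$b$a)" by (simp only: eq)
  also have "\<dots> \<le> (\<Sum>a\<in>UNIV. \<Sum>b\<in>UNIV. cmod (\<rho>$a$b * Y$b$a))"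
    by (rule order_trans[OF norm_sum sum_mono]) (rule norm_sum)
  also have "\<dots> \<le> (\<Sum>a\<in>UNIV. \<Sum>b\<in>UNIV. cmod (Y$b$a))"
  proof (intro sum_mono)
    fix a b
    have "cmod (\<rho>$a$b) \<le> 1" by (rule density_entry_bound[OF assms])
    then show "cmod (\<rho>$a$b * Y$b$a) \<le> cmod (Y$b$a)"
      by (simp add: norm_mult mult_left_le_one_le)
  qed
  finally show ?thesis .
qed

definition X1 :: "complex^'n^'n \<Rightarrow> complex^'n^'n" where "X1 G = G + cadj G"
definition X2 :: "complex^'n^'n \<Rightarrow> complex^'n^'n" where "X2 G = cscale \<i> (G - cadj G)"
definition CG :: "complex^'n^'n \<Rightarrow> real" where
  "CG G = (\<Sum>a\<in>UNIV. \<Sum>b\<in>UNIV. cmod ((X1 G ** X1 G)$b$a)) + (\<Sum>a\<in>UNIV. \<Sum>b\<in>UNIV. cmod ((X2 G ** X2 G)$b$a))"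

lemma cscale_diff: "cscale c (A - B) = cscale c A - cscale c B"
  by (simp add: cscale_def vec_eq_iff algebra_simps)

lemma X1_herm: "cadj (X1 G) = X1 G" by (simp add: X1_def add.commute)
lemma X2_herm: "cadj (X2 G) = X2 G"
proof -
  have "cadj (X2 G) = cscale (cnj \<i>) (cadj G - G)" by (simp only: X2_def cadj_cscale cadj_diff cadj_cadj)
  then show ?thesis by (simp add: X2_def vec_eq_iff cscale_def algebra_simps)
qed

lemma trace_cscale_right: "trace (M ** cscale c A) = c * trace (M ** A)"
  by (simp add: cscale_mult_right trace_cscale)

lemma QFI_bound_general:
  fixes \<rho>f :: "real \<Rightarrow> complex^'n^'n"
  assumes dens: "\<And>\<theta>. density (\<rho>f \<theta>)" and der: "(\<rho>f has_vector_derivative M) (at x)"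
  shows "4 * (cmod (trace (G ** M)))^2 \<le> QFI (\<rho>f x) M * CG G" and "0 \<le> QFI (\<rho>f x) M"
proof -
  have psd: "\<And>\<theta>. psd (\<rho>f \<theta>)" using dens density_psd by blast
  have herm: "\<And>\<theta>. cadj (\<rho>f \<theta>) = \<rho>f \<theta>" using dens density_herm by blast
  have "((\<lambda>\<theta>. cadj (\<rho>f \<theta>)) has_vector_derivative cadj M) (at x)"
    by (rule bounded_linear.has_vector_derivative[OF bl_cadj der])
  then have "(\<rho>f has_vector_derivative cadj M) (at x)" using herm by simp
  then have hM: "cadj M = M" using der vector_derivative_unique_at by blast
  have kz: "qf M z = 0" if "\<rho>f x *v z = 0" for z
    by (rule deriv_psd_kernel[OF der psd hM that])
  have kerM: "vdot a (M *v b) = 0" if "\<rho>f x *v a = 0" "\<rho>f x *v b = 0" for a b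
    by (rule polar_kernel[OF hM kz that])
  obtain L where L: "is_SLD (\<rho>f x) M L" using SLD_exists[OF psd herm hM kerM] by blast
  have Q: "QFI (\<rho>f x) M = Re (trace (\<rho>f x ** L ** L))" by (rule QFI_eq[OF psd herm L])
  show Q0: "0 \<le> QFI (\<rho>f x) M" using Q QFI_nonneg_aux[OF psd L] by simp
  define z where "z = trace (G ** M)"
  have tz: "trace (M ** G) = z" unfolding z_def by (rule trace_mul_sym)
  have tcz: "trace (M ** cadj G) = cnj z"
  proof -
    have "cnj z = trace (cadj (G ** M))" by (simp add: z_def trace_cadj)
    also have "\<dots> = trace (M ** cadj G)" by (simp add: cadj_mult hM)
    finally show ?thesis by simp
  qed
  have r1: "Re (trace (M ** X1 G)) = 2 * Re z"
    by (simp add: X1_def matrix_add_ldistrib trace_add tz tcz)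
  have r2: "Re (trace (M ** X2 G)) = - 2 * Im z"
    by (simp add: X2_def trace_cscale_right matrix_sub_ldistrib trace_sub tz tcz)
  have c1: "(Re (trace (M ** X1 G)))^2 \<le> QFI (\<rho>f x) M * Re (trace (\<rho>f x ** X1 G ** X1 G))"
    using QFI_CS[OF psd L X1_herm] Q by simp
  have c2: "(Re (trace (M ** X2 G)))^2 \<le> QFI (\<rho>f x) M * Re (trace (\<rho>f x ** X2 G ** X2 G))"
    using QFI_CS[OF psd L X2_herm] Q by simp
  have b1: "Re (trace (\<rho>f x ** X1 G ** X1 G)) \<le> (\<Sum>a\<in>UNIV. \<Sum>b\<in>UNIV. cmod ((X1 G ** X1 G)$b$a))"
    using density_trace_bound[OF dens] by (simp add: matrix_mul_assoc[symmetric])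
  have b2: "Re (trace (\<rho>f x ** X2 G ** X2 G)) \<le> (\<Sum>a\<in>UNIV. \<Sum>b\<in>UNIV. cmod ((X2 G ** X2 G)$b$a))"
    using density_trace_bound[OF dens] by (simp add: matrix_mul_assoc[symmetric])
  have "4 * (cmod z)^2 = 4 * ((Re z)^2 + (Im z)^2)" by (simp add: cmod_power2)
  also have "\<dots> = (Re (trace (M ** X1 G)))^2 + (Re (trace (M ** X2 G)))^2"
    unfolding r1 r2 by (simp add: power2_eq_square algebra_simps)
  also have "\<dots> \<le> QFI (\<rho>f x) M * Re (trace (\<rho>f x ** X1 G ** X1 G)) + QFI (\<rho>f x) M * Re (trace (\<rho>f x ** X2 G ** X2 G))"
    using c1 c2 by simp
  also have "\<dots> \<le> QFI (\<rho>f x) M * CG G"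
    unfolding CG_def distrib_left using b1 b2 Q0 by (simp add: add_mono mult_left_mono)
  finally show "4 * (cmod (trace (G ** M)))^2 \<le> QFI (\<rho>f x) M * CG G" by (simp add: z_def)
qed


lemma final_arith:
  fixes a C0 y Q D :: real and N :: nat
  assumes a: "a > 0" and N1: "N \<ge> 1" and NC: "2 * C0 \<le> real N * a"
    and y: "real N * a - C0 \<le> y" and Q: "4 * y^2 \<le> Q * D" and Q0: "0 \<le> Q"
  shows "a^2 / (\<bar>D\<bar> + 1) \<le> Q / (real N)^2"
proof -
  have y0: "real N * a / 2 \<le> y" using NC y by linarith
  have nn: "0 \<le> real N * a / 2" using a by simp
  have "(real N * a / 2)^2 \<le> y^2" using y0 nn by (meson power_mono)
  then have "(real N)^2 * a^2 \<le> 4 * y^2" by (simp add: power2_eq_square field_simps)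
  also have "\<dots> \<le> Q * D" by (rule Q)
  also have "\<dots> \<le> Q * (\<bar>D\<bar> + 1)" using Q0 by (intro mult_left_mono) auto
  finally have "(real N)^2 * a^2 \<le> Q * (\<bar>D\<bar> + 1)" .
  moreover have "(real N)^2 > 0" using N1 by simp
  moreover have "\<bar>D\<bar> + 1 > 0" by simp
  ultimately show ?thesis by (simp add: field_simps mult.commute)
qed

theorem corollary1:
  fixes K :: "real \<Rightarrow> 'k::finite \<Rightarrow> complex^'n::finite^'n"
    and \<theta>0 :: real
    and U :: "real set"
    and lam :: "'p::finite \<Rightarrow> real \<Rightarrow> complex"
    and R :: "'p \<Rightarrow> real \<Rightarrow> complex^'n^'n"
  assumes channel: "\<And>\<theta>. trace_preserving (K \<theta>)"
    and U: "open U" "\<theta>0 \<in> U"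
    and T_C1: "(\<lambda>\<theta>. liouville (K \<theta>)) C1_differentiable_on U"
    and lam_C1: "\<And>i. lam i C1_differentiable_on U"
    and R_C1: "\<And>i. R i C1_differentiable_on U"
    and eig: "\<And>i \<theta>. \<theta> \<in> U \<Longrightarrow>
               liouville (K \<theta>) *v vecz (R i \<theta>) = lam i \<theta> *s vecz (R i \<theta>)"
    and periph: "\<And>i. cmod (lam i \<theta>0) = 1"
    and indep: "\<And>c. (\<Sum>i\<in>UNIV. c i *s vecz (R i \<theta>0)) = 0 \<Longrightarrow> (\<forall>i. c i = 0)"
    and complete: "\<And>v \<mu>. cmod \<mu> = 1 \<Longrightarrow> liouville (K \<theta>0) *v v = \<mu> *s v \<Longrightarrow>
               \<exists>c. v = (\<Sum>i\<in>UNIV. c i *s vecz (R i \<theta>0))"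
    and orth: "\<And>i j. i \<noteq> j \<Longrightarrow> hs_inner (R i \<theta>0) (R j \<theta>0) = 0"
    and moving: "\<exists>j. vector_derivative (lam j) (at \<theta>0) \<noteq> 0"
  shows "\<exists>\<rho>0. density \<rho>0 \<and>
           Liminf sequentially
             (\<lambda>N::nat. ereal (QFI_at (\<lambda>\<theta>. (channel (K \<theta>) ^^ N) \<rho>0) \<theta>0 / (real N)\<^sup>2)) > 0"
proof -
  define T where "T \<theta> = liouville (K \<theta>)" for \<theta>
  define T0 where "T0 = T \<theta>0"
  define T1 where "T1 = vector_derivative T (at \<theta>0)"
  obtain j where jd: "vector_derivative (lam j) (at \<theta>0) \<noteq> 0" using moving by blast
  define lm where "lm = lam j \<theta>0"
  define r where "r i = vecz (R i \<theta>0)" for i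
  define lam0 where "lam0 i = lam i \<theta>0" for i
  define rd where "rd i = vecz (vector_derivative (R i) (at \<theta>0))" for i
  define lamd where "lamd i = vector_derivative (lam i) (at \<theta>0)" for i
  have Teq: "(\<lambda>\<theta>. liouville (K \<theta>)) = T" by (simp add: T_def fun_eq_iff)
  have HT: "(T has_vector_derivative T1) (at \<theta>0)"
    using C1_at[OF T_C1 U(2)] unfolding Teq T1_def .
  have deq: "T1 *v r i + T0 *v rd i = lamd i *s r i + lam0 i *s rd i" for i
  proof -
    have Hr: "((\<lambda>\<theta>. vecz (R i \<theta>)) has_vector_derivative rd i) (at \<theta>0)"
      unfolding rd_def by (rule bounded_linear.has_vector_derivative[OF bl_vecz C1_at[OF R_C1 U(2)]])
    have Hl: "(lam i has_vector_derivative lamd i) (at \<theta>0)"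
      unfolding lamd_def by (rule C1_at[OF lam_C1 U(2)])
    have D1: "((\<lambda>\<theta>. T \<theta> *v vecz (R i \<theta>)) has_vector_derivative
        (T \<theta>0 *v rd i + T1 *v vecz (R i \<theta>0))) (at \<theta>0)"
      by (rule bounded_bilinear.has_vector_derivative[OF bb_mv HT Hr])
    have D2: "((\<lambda>\<theta>. lam i \<theta> *s vecz (R i \<theta>)) has_vector_derivative
        (lam i \<theta>0 *s rd i + lamd i *s vecz (R i \<theta>0))) (at \<theta>0)"
      by (rule bounded_bilinear.has_vector_derivative[OF bb_sm Hl Hr])
    have D1': "((\<lambda>\<theta>. lam i \<theta> *s vecz (R i \<theta>)) has_vector_derivative
        (T \<theta>0 *v rd i + T1 *v vecz (R i \<theta>0))) (at \<theta>0)"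
      by (rule has_vector_derivative_transform_within_open[OF D1 U(1) U(2)]) (simp add: T_def eig)
    have "T \<theta>0 *v rd i + T1 *v vecz (R i \<theta>0) = lam i \<theta>0 *s rd i + lamd i *s vecz (R i \<theta>0)"
      by (rule vector_derivative_unique_at[OF D1' D2])
    then show ?thesis by (simp add: T0_def r_def lam0_def add.commute)
  qed
  interpret P: ps2 T0 lm r lam0 j T1 rd lamd
  proof unfold_locales
    show "\<exists>B. \<forall>N. norm (mp T0 N *v v) \<le> B" for v
      unfolding T0_def T_def by (rule power_bounded[OF channel])
    show "cmod lm = 1" unfolding lm_def by (rule periph)
    show "T0 *v r i = lam0 i *s r i" for i unfolding T0_def T_def r_def lam0_def by (rule eig[OF U(2)])
    show "\<forall>i. c i = 0" if "(\<Sum>i\<in>UNIV. c i *s r i) = 0" for c using indep that unfolding r_def by blast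
    show "\<exists>c. v = (\<Sum>i\<in>UNIV. c i *s r i)" if "T0 *v v = lm *s v" for v
      using complete[OF periph[of j]] that unfolding T0_def T_def r_def lm_def by blast
    show "lam0 j = lm" by (simp add: lam0_def lm_def)
    show "T1 *v r i + T0 *v rd i = lamd i *s r i + lam0 i *s rd i" for i by (rule deq)
  qed
  obtain \<rho>0 where d0: "density \<rho>0" and c0: "P.ell (vecz \<rho>0) \<noteq> 0"
  proof -
    have "\<exists>\<rho>0. density \<rho>0 \<and> P.ell (vecz \<rho>0) \<noteq> 0"
    proof (rule ccontr)
      assume "\<not> ?thesis"
      then have Qd: "\<And>\<rho>. density \<rho> \<Longrightarrow> P.ell (vecz \<rho>) = 0" by blast
      have "P.ell (r j) = 0"
        by (rule dens_induct[where Q = "\<lambda>v. P.ell v = 0"]) (simp_all add: P.ell_zero P.ell_add P.ell_smult Qd)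
      then show False using P.ell_rj by simp
    qed
    then show ?thesis using that by blast
  qed
  define v0 where "v0 = vecz \<rho>0"
  define c where "c = P.ell v0"
  define a where "a = cmod (lamd j) * cmod c"
  have a0: "a > 0" using jd c0 by (simp add: a_def c_def v0_def lamd_def)
  obtain C0 where C0: "\<And>N. cmod (P.ell (Dn T0 T1 N v0) - of_nat N * lm^N * (lamd j * c) / lm) \<le> C0"
    using P.main_est[of v0] unfolding c_def by blast
  define G :: "complex^'n^'n" where "G = (\<chi> b a'. P.ell (axis (a', b) 1))"
  have trG: "trace (G ** M) = P.ell (vecz M)" for M
  proof -
    have "trace (G ** M) = (\<Sum>b\<in>UNIV. \<Sum>a'\<in>UNIV. P.ell (axis (a', b) 1) * M$a'$b)"
      by (simp add: trace_def matrix_matrix_mult_def G_def)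
    also have "\<dots> = (\<Sum>a'\<in>UNIV. \<Sum>b\<in>UNIV. P.ell (axis (a', b) 1) * M$a'$b)" by (rule sum.swap)
    also have "\<dots> = (\<Sum>p\<in>UNIV. vecz M $ p * P.ell (axis p 1))"
      by (simp add: sum_pairs vecz_def mult.commute)
    also have "\<dots> = P.ell (vecz M)" by (rule P.ell_repr[symmetric])
    finally show ?thesis .
  qed
  define Q where "Q N = QFI_at (\<lambda>\<theta>. (channel (K \<theta>) ^^ N) \<rho>0) \<theta>0" for N
  have QN: "4 * (cmod (P.ell (Dn T0 T1 N v0)))^2 \<le> Q N * CG G \<and> 0 \<le> Q N" for N
  proof -
    have eqf: "(\<lambda>\<theta>. (channel (K \<theta>) ^^ N) \<rho>0) = (\<lambda>\<theta>. unvecz (mp (T \<theta>) N *v v0))"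
      by (simp add: fun_eq_iff T_def v0_def flip: vecz_iter)
    have "((\<lambda>\<theta>. mp (T \<theta>) N *v (\<lambda>_. v0) \<theta>) has_vector_derivative
        (Dn (T \<theta>0) T1 N ((\<lambda>_. v0) \<theta>0) + mp (T \<theta>0) N *v 0)) (at \<theta>0)"
      by (rule deriv_iter[OF HT has_vector_derivative_const])
    then have "((\<lambda>\<theta>. mp (T \<theta>) N *v v0) has_vector_derivative Dn T0 T1 N v0) (at \<theta>0)"
      by (simp add: T0_def)
    then have der: "((\<lambda>\<theta>. (channel (K \<theta>) ^^ N) \<rho>0) has_vector_derivative unvecz (Dn T0 T1 N v0)) (at \<theta>0)"
      unfolding eqf by (rule bounded_linear.has_vector_derivative[OF bl_unvecz])
    have dens: "density ((channel (K \<theta>) ^^ N) \<rho>0)" for \<theta>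
      by (rule channel_iter_density[OF channel d0])
    have qe: "Q N = QFI ((channel (K \<theta>0) ^^ N) \<rho>0) (unvecz (Dn T0 T1 N v0))"
      unfolding Q_def QFI_at_def using vector_derivative_at[OF der] by simp
    show ?thesis
      using QFI_bound_general(1)[where \<rho>f = "\<lambda>\<theta>. (channel (K \<theta>) ^^ N) \<rho>0", OF dens der, of G]
        QFI_bound_general(2)[where \<rho>f = "\<lambda>\<theta>. (channel (K \<theta>) ^^ N) \<rho>0", OF dens der]
      unfolding qe trG by simp
  qed
  have low: "real N * a - C0 \<le> cmod (P.ell (Dn T0 T1 N v0))" for N
  proof -
    have "cmod (of_nat N * lm^N * (lamd j * c) / lm) = real N * a"
      using P.lm1 by (simp add: a_def norm_mult norm_divide norm_power)
    then show ?thesis using C0[of N] norm_triangle_ineq2[of "of_nat N * lm^N * (lamd j * c) / lm" "P.ell (Dn T0 T1 N v0)"]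
      by (simp add: norm_minus_commute)
  qed
  obtain N0 :: nat where N0: "2 * \<bar>C0\<bar> / a < real N0" using reals_Archimedean2 by blast
  define \<kappa> where "\<kappa> = a^2 / (\<bar>CG G\<bar> + 1)"
  have kpos: "\<kappa> > 0" using a0 by (simp add: \<kappa>_def)
  have ev: "\<forall>N\<ge>max 1 N0. ereal \<kappa> \<le> ereal (Q N / (real N)\<^sup>2)"
  proof (intro allI impI)
    fix N :: nat assume N: "max 1 N0 \<le> N"
    have "2 * C0 \<le> real N * a"
    proof -
      have "2 * \<bar>C0\<bar> < real N0 * a" using N0 a0 by (simp add: field_simps)
      also have "\<dots> \<le> real N * a" using N a0 by (intro mult_right_mono) auto
      finally show ?thesis by linarith
    qed
    then have "\<kappa> \<le> Q N / (real N)\<^sup>2"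
      unfolding \<kappa>_def using final_arith[OF a0 _ _ low] QN[of N] N by auto
    then show "ereal \<kappa> \<le> ereal (Q N / (real N)\<^sup>2)" by simp
  qed
  have "ereal \<kappa> \<le> Liminf sequentially (\<lambda>N. ereal (Q N / (real N)\<^sup>2))"
  proof (rule Liminf_bounded)
    show "\<forall>\<^sub>F N in sequentially. ereal \<kappa> \<le> ereal (Q N / (real N)\<^sup>2)"
      unfolding eventually_sequentially using ev by blast
  qed
  then have "0 < Liminf sequentially (\<lambda>N. ereal (Q N / (real N)\<^sup>2))"
    using kpos by (meson ereal_less(2) less_le_trans)
  then show ?thesis using d0 unfolding Q_def by blast
qed


end
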